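(* Let $k \in \mathbb{N}$. Every linear $k$-DCFG $G$ is equivalent to (i.e. generates the same language as) some $k$-DCFG $G'=\langle N, \Sigma, P, S\rangle$ all of whose rules have one of the following forms, where $A, B \in N$ and $u \in \Theta$: (1) $A \to u\cdot B$ or $A \to B \cdot u$, with $|u| = 1$; (2) $A \to B \odot_j u$, with $|u| = 1$; (3) $A \to u$, with $|u| = 1$; (4) $S \to \epsilon$ (where $S$ is the start symbol).
   Context: Fix a finite alphabet $\Sigma$; $\Sigma^*$ is the set of words over $\Sigma$ and $\epsilon$ the empty word. $\Theta_k$ is the set of tuples $(u_0,\ldots,u_k)$ with $u_i\in\Sigma^*$, and $\Theta=\bigcup_{k\in\mathbb{N}}\Theta_k$; the rank of $(u_0,\ldots,u_k)$ is $k$, and its length $|u|$ is the sum of the lengths of its components. Rank-$0$ tuples are identified with words; in particular $\epsilon$ also denotes the rank-$0$ tuple $(\epsilon)$. Concatenation $\cdot:\Theta_i\times\Theta_j\to\Theta_{i+j}$ is $(x_0,\ldots,x_i)\cdot(y_0,\ldots,y_j)=(x_0,\ldots,x_{i-1},x_iy_0,y_1,\ldots,y_j)$, and for $1\le l\le i$ intercalation $\odot_l:\Theta_i\times\Theta_j\to\Theta_{i+j-1}$ is $(x_0,\ldots,x_i)\odot_l(y_0,\ldots,y_j)=(x_0,\ldots,x_{l-2},x_{l-1}y_0,y_1,\ldots,y_{j-1},y_jx_l,x_{l+1},\ldots,x_i)$. Let $N$ be a finite set of nonterminals disjoint from $\Sigma$ with a rank function $\mathrm{rk}:N\to\mathbb{N}$.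 The set of $k$-correct terms $\mathrm{Tm}_k(N,\Sigma)$ and their ranks are defined inductively: every tuple in $\Theta_j$ with $j\le k$ is a term of rank $j$, and every nonterminal $A$ with $\mathrm{rk}(A)\le k$ is a term of rank $\mathrm{rk}(A)$; if $\alpha,\beta$ are terms with $\mathrm{rk}\,\alpha+\mathrm{rk}\,\beta\le k$ then $(\alpha\cdot\beta)$ is a term of rank $\mathrm{rk}\,\alpha+\mathrm{rk}\,\beta$; if $1\le j\le k$, $\mathrm{rk}\,\alpha\ge j$ and $\mathrm{rk}\,\alpha+\mathrm{rk}\,\beta\le k+1$ then $(\alpha\odot_j\beta)$ is a term of rank $\mathrm{rk}\,\alpha+\mathrm{rk}\,\beta-1$. A ground term is one containing no nonterminals; its value $\nu(\alpha)\in\Theta$ is obtained by interpreting $\cdot$ and $\odot_j$ as the operations above. A context $C[x]$ is a term with one leaf occurrence of a variable $x$ of some rank; $C[\beta]$ is the result of substituting a term $\beta$ of the same rank for $x$. A $k$-displacement context-free grammar ($k$-DCFG) is $G=\langle N,\Sigma,P,S\rangle$ where $S\in N$ has rank $0$ and $P$ is a finite set of rules $A\to\alpha$ with $A\in N$, $\alpha\in\mathrm{Tm}_k(N,\Sigma)$ and $\mathrm{rk}(A)=\mathrm{rk}(\alpha)$. Standing assumption: all tuples occurring as leaves of right-hand sides of rules have length at most $1$. Derivability $\vdash_G$ is the smallest reflexive transitive relation between nonterminals and terms such that $(B\to\beta)\in P$ and $A\vdash_G C[B]$ imply $A\vdash_G C[\beta]$ for any context $C$. $L_G(A)=\{\nu(\alpha)\mid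 A\vdash_G\alpha,\ \alpha \text{ ground}\}$ and $L(G)=L_G(S)$. Two grammars are equivalent if they generate the same language. A term is linear if it contains at most one occurrence of a nonterminal; a grammar is linear if the right-hand sides of all its rules are linear. All right-hand sides in the claim are required to be $k$-correct terms of the same rank as the left-hand side. *)

theory Defs
  imports Main
begin

text \<open>A tuple (u_0,...,u_k) is a nonempty list of words; its rank is length - 1.\<close>

type_synonym 'a tuple = "'a list list"

definition tup_rank :: "'a tuple \<Rightarrow> nat" where
  "tup_rank u = length u - 1"

definition tup_len :: "'a tuple \<Rightarrow> nat" where
  "tup_len u = sum_list (map length u)"

definition tcat :: "'a tuple \<Rightarrow> 'a tuple \<Rightarrow> 'a tuple" where
  "tcat x y = butlast x @ [last x @ hd y] @ tl y"

text \<open>Intercalation at position l (1-based): equals (x_0..x_{l-1}) . y . (x_l..x_i).\<close>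
definition tintc :: "nat \<Rightarrow> 'a tuple \<Rightarrow> 'a tuple \<Rightarrow> 'a tuple" where
  "tintc l x y = tcat (tcat (take l x) y) (drop l x)"

datatype ('n, 'a) tm =
    Tup "'a tuple"
  | NT 'n
  | Cat "('n, 'a) tm" "('n, 'a) tm"
  | Intc nat "('n, 'a) tm" "('n, 'a) tm"

fun trank :: "('n \<Rightarrow> nat) \<Rightarrow> ('n, 'a) tm \<Rightarrow> nat" where
  "trank rk (Tup u) = tup_rank u"
| "trank rk (NT A) = rk A"
| "trank rk (Cat a b) = trank rk a + trank rk b"
| "trank rk (Intc j a b) = trank rk a + trank rk b - 1"

fun correct :: "nat \<Rightarrow> ('n \<Rightarrow> nat) \<Rightarrow> ('n, 'a) tm \<Rightarrow> bool" where
  "correct k rk (Tup u) = (u \<noteq> [] \<and> tup_rank u \<le> k)"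
| "correct k rk (NT A) = (rk A \<le> k)"
| "correct k rk (Cat a b) =
     (correct k rk a \<and> correct k rk b \<and> trank rk a + trank rk b \<le> k)"
| "correct k rk (Intc j a b) =
     (correct k rk a \<and> correct k rk b \<and> 1 \<le> j \<and> j \<le> k \<and>
      j \<le> trank rk a \<and> trank rk a + trank rk b \<le> k + 1)"

fun nts_of :: "('n, 'a) tm \<Rightarrow> 'n list" where
  "nts_of (Tup u) = []"
| "nts_of (NT A) = [A]"
| "nts_of (Cat a b) = nts_of a @ nts_of b"
| "nts_of (Intc j a b) = nts_of a @ nts_of b"

fun leaves :: "('n, 'a) tm \<Rightarrow> 'a tuple list" where
  "leaves (Tup u) = [u]"
| "leaves (NT A) = []"
| "leaves (Cat a b) = leaves a @ leaves b"
| "leaves (Intc j a b) = leaves a @ leaves b"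

definition ground :: "('n, 'a) tm \<Rightarrow> bool" where
  "ground t \<longleftrightarrow> nts_of t = []"

fun val :: "('n, 'a) tm \<Rightarrow> 'a tuple" where
  "val (Tup u) = u"
| "val (NT A) = undefined"
| "val (Cat a b) = tcat (val a) (val b)"
| "val (Intc j a b) = tintc j (val a) (val b)"

record ('n, 'a) grammar =
  nts :: "'n set"
  rk :: "'n \<Rightarrow> nat"
  rules :: "('n \<times> ('n, 'a) tm) set"
  start :: 'n

text \<open>G is a k-DCFG over the alphabet Sig (including the standing assumption
  that leaf tuples of right-hand sides have length at most 1).\<close>
definition is_dcfg :: "nat \<Rightarrow> 'a set \<Rightarrow> ('n, 'a) grammar \<Rightarrow> bool" where
  "is_dcfg k Sig G \<longleftrightarrow>
     finite (nts G) \<and> start G \<in> nts G \<and> rk G (start G) = 0 \<and>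
     finite (rules G) \<and>
     (\<forall>(A, \<alpha>) \<in> rules G.
        A \<in> nts G \<and> correct k (rk G) \<alpha> \<and> rk G A = trank (rk G) \<alpha> \<and>
        set (nts_of \<alpha>) \<subseteq> nts G \<and>
        (\<forall>u \<in> set (leaves \<alpha>). tup_len u \<le> 1 \<and> (\<forall>w \<in> set u. set w \<subseteq> Sig)))"

inductive step :: "('n \<times> ('n, 'a) tm) set \<Rightarrow> ('n, 'a) tm \<Rightarrow> ('n, 'a) tm \<Rightarrow> bool"
  for P where
  rule: "(B, \<beta>) \<in> P \<Longrightarrow> step P (NT B) \<beta>"
| cat1: "step P a a' \<Longrightarrow> step P (Cat a b) (Cat a' b)"
| cat2: "step P b b' \<Longrightarrow> step P (Cat a b) (Cat a b')"
| intc1: "step P a a' \<Longrightarrow> step P (Intc j a b) (Intc j a' b)"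
| intc2: "step P b b' \<Longrightarrow> step P (Intc j a b) (Intc j a b')"

definition derives :: "('n, 'a) grammar \<Rightarrow> 'n \<Rightarrow> ('n, 'a) tm \<Rightarrow> bool" where
  "derives G A \<alpha> \<longleftrightarrow> (step (rules G))\<^sup>*\<^sup>* (NT A) \<alpha>"

definition lang_nt :: "('n, 'a) grammar \<Rightarrow> 'n \<Rightarrow> 'a tuple set" where
  "lang_nt G A = {val \<alpha> | \<alpha>. derives G A \<alpha> \<and> ground \<alpha>}"

definition lang :: "('n, 'a) grammar \<Rightarrow> 'a tuple set" where
  "lang G = lang_nt G (start G)"

definition linear_grammar :: "('n, 'a) grammar \<Rightarrow> bool" where
  "linear_grammar G \<longleftrightarrow> (\<forall>(A, \<alpha>) \<in> rules G. length (nts_of \<alpha>) \<le> 1)"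

definition nf_rule :: "('n, 'a) grammar \<Rightarrow> 'n \<times> ('n, 'a) tm \<Rightarrow> bool" where
  "nf_rule G r \<longleftrightarrow>
     (\<exists>A B u. A \<in> nts G \<and> B \<in> nts G \<and> tup_len u = 1 \<and>
        (r = (A, Cat (Tup u) (NT B)) \<or> r = (A, Cat (NT B) (Tup u)))) \<or>
     (\<exists>A B u j. A \<in> nts G \<and> B \<in> nts G \<and> tup_len u = 1 \<and>
        r = (A, Intc j (NT B) (Tup u))) \<or>
     (\<exists>A u. A \<in> nts G \<and> tup_len u = 1 \<and> r = (A, Tup u)) \<or>
     r = (start G, Tup [[]])"

definition normal_form :: "('n, 'a) grammar \<Rightarrow> bool" where
  "normal_form G \<longleftrightarrow> (\<forall>r \<in> rules G. nf_rule G r)"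

end

theory Submission
  imports Defs
begin

fun ev :: "('n, 'a) tm \<Rightarrow> 'a tuple \<Rightarrow> 'a tuple" where
  "ev (Tup u) z = u"
| "ev (NT B) z = z"
| "ev (Cat a b) z = tcat (ev a z) (ev b z)"
| "ev (Intc j a b) z = tintc j (ev a z) (ev b z)"

fun repl :: "('n, 'a) tm \<Rightarrow> ('n, 'a) tm \<Rightarrow> ('n, 'a) tm" where
  "repl (Tup u) c = Tup u"
| "repl (NT B) c = c"
| "repl (Cat a b) c = Cat (repl a c) (repl b c)"
| "repl (Intc j a b) c = Intc j (repl a c) (repl b c)"

inductive gen :: "('n \<times> ('n, 'a) tm) set \<Rightarrow> 'n \<Rightarrow> 'a tuple \<Rightarrow> bool" for P where
  g0: "(A, \<alpha>) \<in> P \<Longrightarrow> nts_of \<alpha> = [] \<Longrightarrow> gen P A (val \<alpha>)"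
| g1: "(A, \<alpha>) \<in> P \<Longrightarrow> nts_of \<alpha> = [B] \<Longrightarrow> gen P B z \<Longrightarrow> gen P A (ev \<alpha> z)"

lemma val_ev: "nts_of t = [] \<Longrightarrow> val t = ev t z"
  by (induction t) auto

lemma ev_repl: "ev (repl t c) z = ev t (ev c z)"
  by (induction t) auto

lemma repl_ground: "nts_of t = [] \<Longrightarrow> repl t c = t"
  by (induction t) auto

lemma repl_NT: "nts_of t = [B] \<Longrightarrow> repl t (NT B) = t"
  by (induction t) (auto simp: append_eq_Cons_conv repl_ground)

lemma nts_repl: "nts_of t = [B] \<Longrightarrow> nts_of (repl t c) = nts_of c"
  by (induction t) (auto simp: append_eq_Cons_conv repl_ground)

lemma step_nts: "step P t t' \<Longrightarrow> nts_of t \<noteq> []"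
  by (induction rule: step.induct) auto

lemma step_repl: "step P t t' \<Longrightarrow> length (nts_of t) \<le> 1 \<Longrightarrow>
   \<exists>B c. nts_of t = [B] \<and> (B, c) \<in> P \<and> t' = repl t c"
proof (induction rule: step.induct)
  case (rule B \<beta>) then show ?case by auto
next
  case (cat1 a a' b)
  then have "nts_of a \<noteq> []" using step_nts by blast
  with cat1 have "nts_of b = []" "length (nts_of a) \<le> 1" by auto
  with cat1 show ?case by (auto simp: repl_ground)
next
  case (cat2 b b' a)
  then have "nts_of b \<noteq> []" using step_nts by blast
  with cat2 have "nts_of a = []" "length (nts_of b) \<le> 1" by auto
  with cat2 show ?case by (auto simp: repl_ground)
next
  case (intc1 a a' j b)
  then have "nts_of a \<noteq> []" using step_nts by blast
  with intc1 have "nts_of b = []" "length (nts_of a) \<le> 1" by auto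
  with intc1 show ?case by (auto simp: repl_ground)
next
  case (intc2 b b' j a)
  then have "nts_of b \<noteq> []" using step_nts by blast
  with intc2 have "nts_of a = []" "length (nts_of b) \<le> 1" by auto
  with intc2 show ?case by (auto simp: repl_ground)
qed

lemma step_lift: "step P s s' \<Longrightarrow> nts_of t = [B] \<Longrightarrow> step P (repl t s) (repl t s')"
proof (induction t)
  case (Cat a b)
  then show ?case
    by (auto simp: append_eq_Cons_conv repl_ground intro: step.intros)
next
  case (Intc j a b)
  then show ?case
    by (auto simp: append_eq_Cons_conv repl_ground intro: step.intros)
qed auto

lemma steps_lift: "(step P)\<^sup>*\<^sup>* s s' \<Longrightarrow> nts_of t = [B] \<Longrightarrow> (step P)\<^sup>*\<^sup>* (repl t s) (repl t s')"
  by (induction rule: rtranclp_induct) (auto intro: rtranclp.rtrancl_into_rtrancl step_lift)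

lemma gen_derives: "gen P A y \<Longrightarrow> \<exists>\<alpha>. (step P)\<^sup>*\<^sup>* (NT A) \<alpha> \<and> nts_of \<alpha> = [] \<and> val \<alpha> = y"
proof (induction rule: gen.induct)
  case (g0 A \<alpha>)
  then show ?case by (auto intro: step.rule)
next
  case (g1 A \<alpha> B z)
  then obtain \<gamma> where g: "(step P)\<^sup>*\<^sup>* (NT B) \<gamma>" "nts_of \<gamma> = []" "val \<gamma> = z" by auto
  have "(step P)\<^sup>*\<^sup>* (repl \<alpha> (NT B)) (repl \<alpha> \<gamma>)" using steps_lift[OF g(1) g1(2)] .
  then have "(step P)\<^sup>*\<^sup>* \<alpha> (repl \<alpha> \<gamma>)" using repl_NT[OF g1(2)] by simp
  moreover have "step P (NT A) \<alpha>" using g1(1) by (rule step.rule)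
  ultimately have "(step P)\<^sup>*\<^sup>* (NT A) (repl \<alpha> \<gamma>)" by (meson converse_rtranclp_into_rtranclp)
  moreover have "nts_of (repl \<alpha> \<gamma>) = []" using nts_repl[OF g1(2)] g(2) by simp
  moreover have "val (repl \<alpha> \<gamma>) = ev \<alpha> z"
    using val_ev[OF calculation(2)] val_ev[OF g(2)] g(3) ev_repl by metis
  ultimately show ?case by blast
qed

lemma derives_gen_aux:
  assumes "(step P)\<^sup>*\<^sup>* t \<alpha>" "nts_of \<alpha> = []" "\<forall>(A, \<beta>) \<in> P. length (nts_of \<beta>) \<le> 1"
    "length (nts_of t) \<le> 1"
  shows "(nts_of t = [] \<longrightarrow> t = \<alpha>) \<and> (\<forall>B. nts_of t = [B] \<longrightarrow> (\<exists>z. gen P B z \<and> val \<alpha> = ev t z))"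
  using assms(1,4)
proof (induction rule: converse_rtranclp_induct)
  case base
  then show ?case using assms(2) by auto
next
  case (step t t')
  from step_repl[OF step(1) step(4)] obtain B c where
    bc: "nts_of t = [B]" "(B, c) \<in> P" "t' = repl t c" by blast
  have nt': "nts_of t' = nts_of c" using bc nts_repl by metis
  have lc: "length (nts_of c) \<le> 1" using assms(3) bc(2) by auto
  have IH: "(nts_of t' = [] \<longrightarrow> t' = \<alpha>) \<and> (\<forall>B. nts_of t' = [B] \<longrightarrow> (\<exists>z. gen P B z \<and> val \<alpha> = ev t' z))"
    using step(3) nt' lc by simp
  show ?case
  proof (cases "nts_of c")
    case Nil
    then have "t' = \<alpha>" using IH nt' by simp
    then have "val \<alpha> = ev t (val c)"
      using assms(2) val_ev[of \<alpha>] val_ev[OF Nil] bc(3) ev_repl by metis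
    moreover have "gen P B (val c)" using gen.g0[OF bc(2) Nil] .
    ultimately show ?thesis using bc(1) by auto
  next
    case (Cons C cs)
    then have "cs = []" using lc by simp
    with Cons have cC: "nts_of c = [C]" by simp
    then obtain z where "gen P C z" "val \<alpha> = ev t' z" using IH nt' by auto
    then have "gen P B (ev c z)" "val \<alpha> = ev t (ev c z)" using gen.g1[OF bc(2) cC] bc(3) ev_repl by auto
    then show ?thesis using bc(1) by auto
  qed
qed

lemma lang_nt_gen:
  assumes "\<forall>(A, \<beta>) \<in> rules G. length (nts_of \<beta>) \<le> 1"
  shows "lang_nt G A = {y. gen (rules G) A y}"
proof
  show "lang_nt G A \<subseteq> {y. gen (rules G) A y}"
  proof
    fix y assume "y \<in> lang_nt G A"
    then obtain \<alpha> where a: "derives G A \<alpha>" "ground \<alpha>" "y = val \<alpha>" by (auto simp: lang_nt_def)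
    then show "y \<in> {y. gen (rules G) A y}"
      using derives_gen_aux[of "rules G" "NT A" \<alpha>] assms by (auto simp: derives_def ground_def)
  qed
next
  show "{y. gen (rules G) A y} \<subseteq> lang_nt G A"
    using gen_derives by (fastforce simp: lang_nt_def derives_def ground_def)
qed

datatype 'a sy = L 'a | S | H nat

fun sub :: "'a tuple \<Rightarrow> 'a sy \<Rightarrow> 'a sy list" where
  "sub z (L a) = [L a]"
| "sub z S = [S]"
| "sub z (H i) = map L (z ! i)"

definition apT :: "'a sy list \<Rightarrow> 'a tuple \<Rightarrow> 'a sy list" where
  "apT T z = concat (map (sub z) T)"

lemma apT_Nil[simp]: "apT [] z = []"
  and apT_Cons[simp]: "apT (x # T) z = sub z x @ apT T z"
  and apT_append[simp]: "apT (T @ U) z = apT T z @ apT U z"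
  by (auto simp: apT_def)

fun joinS :: "'a sy list list \<Rightarrow> 'a sy list" where
  "joinS [] = []"
| "joinS [c] = c"
| "joinS (c # d # cs) = c @ S # joinS (d # cs)"

definition cntS :: "'a sy list \<Rightarrow> nat" where
  "cntS s = length (filter (\<lambda>x. x = S) s)"

lemma cntS_simps[simp]: "cntS [] = 0" "cntS (S # s) = Suc (cntS s)"
  "cntS (L a # s) = cntS s" "cntS (H i # s) = cntS s" "cntS (s @ t) = cntS s + cntS t"
  by (auto simp: cntS_def)

definition holesOf :: "'a sy list \<Rightarrow> nat list" where
  "holesOf s = concat (map (\<lambda>x. case x of H i \<Rightarrow> [i] | _ \<Rightarrow> []) s)"

lemma holesOf_simps[simp]: "holesOf [] = []" "holesOf (S # s) = holesOf s"
  "holesOf (L a # s) = holesOf s" "holesOf (H i # s) = i # holesOf s"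
  "holesOf (s @ t) = holesOf s @ holesOf t"
  by (auto simp: holesOf_def)

fun isL :: "'a sy \<Rightarrow> bool" where
  "isL (L a) = True" | "isL _ = False"

definition nL :: "'a sy list \<Rightarrow> nat" where
  "nL s = length (filter isL s)"

lemma nL_simps[simp]: "nL [] = 0" "nL (S # s) = nL s"
  "nL (L a # s) = Suc (nL s)" "nL (H i # s) = nL s" "nL (s @ t) = nL s + nL t"
  by (auto simp: nL_def)

lemma joinS_Cons: "ys \<noteq> [] \<Longrightarrow> joinS (x # ys) = x @ S # joinS ys"
  by (cases ys) auto

lemma joinS_append: "xs \<noteq> [] \<Longrightarrow> ys \<noteq> [] \<Longrightarrow> joinS (xs @ ys) = joinS xs @ S # joinS ys"
  by (induction xs rule: joinS.induct) (auto simp: joinS_Cons)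

lemma joinS_merge: "joinS (xs @ [a]) @ joinS (b # ys) = joinS (xs @ [a @ b] @ ys)"
proof (induction xs)
  case Nil then show ?case by (cases ys) auto
next
  case (Cons x xs) then show ?case by (simp add: joinS_Cons)
qed

lemma cntS_joinS: "(\<forall>c\<in>set cs. S \<notin> set c) \<Longrightarrow> cntS (joinS cs) = length cs - 1"
proof (induction cs rule: joinS.induct)
  case (2 c) then show ?case by (auto simp: cntS_def filter_empty_conv)
next
  case (3 c d cs) then show ?case by (auto simp: cntS_def filter_empty_conv)
qed auto

lemma apT_joinS: "apT (joinS cs) z = joinS (map (\<lambda>c. apT c z) cs)"
  by (induction cs rule: joinS.induct) auto

lemma holesOf_joinS: "holesOf (joinS cs) = concat (map holesOf cs)"
  by (induction cs rule: joinS.induct) auto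

lemma nL_joinS: "nL (joinS cs) = sum_list (map nL cs)"
  by (induction cs rule: joinS.induct) auto

definition flat :: "'a tuple \<Rightarrow> 'a sy list" where
  "flat z = joinS (map (map L) z)"

lemma cntS_flat: "cntS (flat z) = length z - 1"
  unfolding flat_def by (subst cntS_joinS) auto

lemma holesOf_flat[simp]: "holesOf (flat z) = []"
  unfolding flat_def holesOf_joinS by (auto simp: holesOf_def)

lemma apT_flat[simp]: "apT (flat u) z = flat u"
proof -
  have "apT (map L w) z = map L w" for w :: "'a list" by (induction w) auto
  then show ?thesis unfolding flat_def apT_joinS by (simp add: comp_def)
qed

lemma flat_append: "xs \<noteq> [] \<Longrightarrow> ys \<noteq> [] \<Longrightarrow> flat (xs @ ys) = flat xs @ S # flat ys"
  unfolding flat_def by (simp add: joinS_append)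

lemma tcat_ne: "tcat x y \<noteq> []"
  by (simp add: tcat_def)

lemma length_tcat: "x \<noteq> [] \<Longrightarrow> y \<noteq> [] \<Longrightarrow> length (tcat x y) = length x + length y - 1"
  by (cases y) (auto simp: tcat_def)

lemma flat_tcat: "x \<noteq> [] \<Longrightarrow> y \<noteq> [] \<Longrightarrow> flat (tcat x y) = flat x @ flat y"
proof -
  assume x: "x \<noteq> []" and y: "y \<noteq> []"
  have ex: "x = butlast x @ [last x]" using x by simp
  have ey: "y = hd y # tl y" using y by simp
  have "flat x @ flat y = joinS (map (map L) (butlast x) @ [map L (last x)]) @ joinS (map L (hd y) # map (map L) (tl y))"
    unfolding flat_def by (subst ex, subst ey, simp)
  also have "\<dots> = joinS (map (map L) (butlast x) @ [map L (last x) @ map L (hd y)] @ map (map L) (tl y))"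
    by (rule joinS_merge)
  also have "\<dots> = flat (tcat x y)" by (simp add: flat_def tcat_def)
  finally show ?thesis by simp
qed

fun replS :: "nat \<Rightarrow> 'a sy list \<Rightarrow> 'a sy list \<Rightarrow> 'a sy list" where
  "replS n [] v = []"
| "replS n (x # xs) v = (if x = S then (if n = 1 then v @ xs else S # replS (n - 1) xs v)
                         else x # replS n xs v)"

lemma replS_split: "cntS p + 1 = n \<Longrightarrow> replS n (p @ S # q) v = p @ v @ q"
proof (induction p arbitrary: n)
  case (Cons x p)
  then show ?case by (cases x) auto
qed auto

lemma split_S: "1 \<le> n \<Longrightarrow> n \<le> cntS U \<Longrightarrow> \<exists>p q. U = p @ S # q \<and> cntS p + 1 = n"
proof (induction U arbitrary: n)
  case Nil then show ?case by simp
next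
  case (Cons x U)
  show ?case
  proof (cases "x = S")
    case True
    show ?thesis
    proof (cases "n = 1")
      case True with \<open>x = S\<close> show ?thesis by (intro exI[of _ "[]"] exI[of _ U]) auto
    next
      case False
      have "\<exists>p q. U = p @ S # q \<and> cntS p + 1 = n - 1"
        using Cons.IH[of "n - 1"] Cons.prems True False by auto
      then obtain p q where "U = p @ S # q" "cntS p + 1 = n - 1" by blast
      with True False Cons.prems show ?thesis by (intro exI[of _ "x # p"] exI[of _ q]) auto
    qed
  next
    case False
    with Cons have "n \<le> cntS U" by (cases x) auto
    with Cons obtain p q where "U = p @ S # q" "cntS p + 1 = n" by blast
    with False show ?thesis by (intro exI[of _ "x # p"] exI[of _ q]) (cases x, auto)
  qed
qed

lemma cntS_sub[simp]: "cntS (sub z x) = (if x = S then 1 else 0)"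
  by (cases x) (auto simp: cntS_def filter_empty_conv)

lemma cntS_apT[simp]: "cntS (apT T z) = cntS T"
  by (induction T) (auto, case_tac a, auto)

lemma apT_replS: "1 \<le> n \<Longrightarrow> n \<le> cntS U \<Longrightarrow> apT (replS n U V) z = replS n (apT U z) (apT V z)"
proof -
  assume "1 \<le> n" "n \<le> cntS U"
  then obtain p q where pq: "U = p @ S # q" "cntS p + 1 = n" using split_S by blast
  have "replS n (apT U z) (apT V z) = replS n (apT p z @ S # apT q z) (apT V z)" using pq by simp
  also have "\<dots> = apT p z @ apT V z @ apT q z" using pq by (intro replS_split) simp
  moreover have "replS n U V = p @ V @ q" using pq replS_split by metis
  ultimately show ?thesis by simp
qed

lemma holesOf_replS: "1 \<le> n \<Longrightarrow> n \<le> cntS U \<Longrightarrow>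
  (holesOf V = [] \<longrightarrow> holesOf (replS n U V) = holesOf U) \<and>
  (holesOf U = [] \<longrightarrow> holesOf (replS n U V) = holesOf V)"
proof -
  assume "1 \<le> n" "n \<le> cntS U"
  then obtain p q where pq: "U = p @ S # q" "cntS p + 1 = n" using split_S by blast
  then show ?thesis using replS_split[OF pq(2)] by auto
qed

lemma cntS_replS: "1 \<le> n \<Longrightarrow> n \<le> cntS U \<Longrightarrow> cntS (replS n U V) = cntS U + cntS V - 1"
proof -
  assume "1 \<le> n" "n \<le> cntS U"
  then obtain p q where pq: "U = p @ S # q" "cntS p + 1 = n" using split_S by blast
  then show ?thesis using replS_split[OF pq(2)] by auto
qed

lemma nL_replS: "1 \<le> n \<Longrightarrow> n \<le> cntS U \<Longrightarrow> nL (replS n U V) = nL U + nL V"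
proof -
  assume "1 \<le> n" "n \<le> cntS U"
  then obtain p q where pq: "U = p @ S # q" "cntS p + 1 = n" using split_S by blast
  then show ?thesis using replS_split[OF pq(2)] by auto
qed

lemma set_replS: "set (replS n U V) \<subseteq> set U \<union> set V"
  by (induction n U V rule: replS.induct) auto

lemma flat_tintc: "1 \<le> j \<Longrightarrow> j < length x \<Longrightarrow> y \<noteq> [] \<Longrightarrow>
   flat (tintc j x y) = replS j (flat x) (flat y)"
proof -
  assume j: "1 \<le> j" "j < length x" and y: "y \<noteq> []"
  have t: "take j x \<noteq> []" and d: "drop j x \<noteq> []" using j by auto
  have "flat (tintc j x y) = flat (take j x) @ flat y @ flat (drop j x)"
    unfolding tintc_def using t d y by (simp add: flat_tcat tcat_ne)
  moreover have "flat x = flat (take j x) @ S # flat (drop j x)"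
    using flat_append[OF t d] by simp
  moreover have "cntS (flat (take j x)) + 1 = j" using j by (simp add: cntS_flat)
  ultimately show ?thesis using replS_split by metis
qed

lemma length_tintc: "1 \<le> j \<Longrightarrow> j < length x \<Longrightarrow> y \<noteq> [] \<Longrightarrow>
   length (tintc j x y) = length x + length y - 2"
proof -
  assume j: "1 \<le> j" "j < length x" and y: "y \<noteq> []"
  have t: "take j x \<noteq> []" and d: "drop j x \<noteq> []" using j by auto
  have "length (tcat (take j x) y) = j + length y - 1" using t y j by (simp add: length_tcat)
  then show ?thesis unfolding tintc_def using t d y j by (simp add: length_tcat tcat_ne)
qed

definition holes :: "nat \<Rightarrow> 'a sy list" where
  "holes r = joinS (map (\<lambda>i. [H i]) [0..<Suc r])"

lemma apT_holes: "length z = Suc r \<Longrightarrow> apT (holes r) z = flat z"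
proof -
  assume l: "length z = Suc r"
  have "map (\<lambda>c. apT c z) (map (\<lambda>i. [H i]) [0..<Suc r]) = map (\<lambda>i. map L (z ! i)) [0..<length z]"
    using l by simp
  also have "\<dots> = map (map L) z" by (rule nth_equalityI) auto
  finally have "map (\<lambda>c. apT c z) (map (\<lambda>i. [H i]) [0..<Suc r]) = map (map L) z" .
  then show ?thesis unfolding holes_def apT_joinS flat_def by simp
qed

lemma cntS_holes[simp]: "cntS (holes r) = r"
  unfolding holes_def by (subst cntS_joinS) auto

lemma holesOf_holes[simp]: "holesOf (holes r) = [0..<Suc r]"
  unfolding holes_def holesOf_joinS by (induction r) auto

lemma nL_holes[simp]: "nL (holes r) = 0"
  unfolding holes_def nL_joinS by (induction r) auto

lemma set_holes: "x \<in> set (holes r) \<Longrightarrow> x = S \<or> (\<exists>i\<le>r. x = H i)"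
proof -
  assume xin: "x \<in> set (holes r)" 
  have "x \<in> set (joinS cs) \<Longrightarrow> x = S \<or> (\<exists>c\<in>set cs. x \<in> set c)" for cs
    by (induction cs rule: joinS.induct) auto
  moreover note xin
  ultimately have "x = S \<or> (\<exists>c\<in>set (map (\<lambda>i. [H i]) [0..<Suc r]). x \<in> set c)"
    unfolding holes_def by blast
  then show "x = S \<or> (\<exists>i\<le>r. x = H i)" by (auto simp del: upt_Suc)
qed

fun ctxT :: "('n \<Rightarrow> nat) \<Rightarrow> ('n, 'a) tm \<Rightarrow> 'a sy list" where
  "ctxT rf (Tup u) = flat u"
| "ctxT rf (NT B) = holes (rf B)"
| "ctxT rf (Cat a b) = ctxT rf a @ ctxT rf b"
| "ctxT rf (Intc j a b) = replS j (ctxT rf a) (ctxT rf b)"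

lemma EV:
  assumes "correct k rf \<alpha>" "nts_of \<alpha> = [] \<or> (\<exists>B. nts_of \<alpha> = [B] \<and> length z = Suc (rf B))"
  shows "length (ev \<alpha> z) = Suc (trank rf \<alpha>) \<and> flat (ev \<alpha> z) = apT (ctxT rf \<alpha>) z
     \<and> cntS (ctxT rf \<alpha>) = trank rf \<alpha>
     \<and> (nts_of \<alpha> = [] \<longrightarrow> holesOf (ctxT rf \<alpha>) = [])
     \<and> (\<forall>B. nts_of \<alpha> = [B] \<longrightarrow> holesOf (ctxT rf \<alpha>) = [0..<Suc (rf B)])"
  using assms
proof (induction \<alpha>)
  case (Tup u)
  then show ?case by (auto simp: tup_rank_def cntS_flat)
next
  case (NT B)
  then show ?case by (auto simp: apT_holes)
next
  case (Cat a b)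
  have pa: "nts_of a = [] \<or> (\<exists>B. nts_of a = [B] \<and> length z = Suc (rf B))"
   and pb: "nts_of b = [] \<or> (\<exists>B. nts_of b = [B] \<and> length z = Suc (rf B))"
    using Cat.prems(2) by (auto simp: append_eq_Cons_conv)
  have A: "length (ev a z) = Suc (trank rf a) \<and> flat (ev a z) = apT (ctxT rf a) z
     \<and> cntS (ctxT rf a) = trank rf a \<and> (nts_of a = [] \<longrightarrow> holesOf (ctxT rf a) = [])
     \<and> (\<forall>B. nts_of a = [B] \<longrightarrow> holesOf (ctxT rf a) = [0..<Suc (rf B)])"
    using Cat.IH(1) Cat.prems(1) pa by auto
  have B: "length (ev b z) = Suc (trank rf b) \<and> flat (ev b z) = apT (ctxT rf b) z
     \<and> cntS (ctxT rf b) = trank rf b \<and> (nts_of b = [] \<longrightarrow> holesOf (ctxT rf b) = [])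
     \<and> (\<forall>B. nts_of b = [B] \<longrightarrow> holesOf (ctxT rf b) = [0..<Suc (rf B)])"
    using Cat.IH(2) Cat.prems(1) pb by auto
  have ne: "ev a z \<noteq> []" "ev b z \<noteq> []" using A B by auto
  show ?case using A B ne Cat.prems(2)
    by (auto simp: length_tcat flat_tcat append_eq_Cons_conv)
next
  case (Intc j a b)
  have pa: "nts_of a = [] \<or> (\<exists>B. nts_of a = [B] \<and> length z = Suc (rf B))"
   and pb: "nts_of b = [] \<or> (\<exists>B. nts_of b = [B] \<and> length z = Suc (rf B))"
    using Intc.prems(2) by (auto simp: append_eq_Cons_conv)
  have A: "length (ev a z) = Suc (trank rf a) \<and> flat (ev a z) = apT (ctxT rf a) z
     \<and> cntS (ctxT rf a) = trank rf a \<and> (nts_of a = [] \<longrightarrow> holesOf (ctxT rf a) = [])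
     \<and> (\<forall>B. nts_of a = [B] \<longrightarrow> holesOf (ctxT rf a) = [0..<Suc (rf B)])"
    using Intc.IH(1) Intc.prems(1) pa by auto
  have B: "length (ev b z) = Suc (trank rf b) \<and> flat (ev b z) = apT (ctxT rf b) z
     \<and> cntS (ctxT rf b) = trank rf b \<and> (nts_of b = [] \<longrightarrow> holesOf (ctxT rf b) = [])
     \<and> (\<forall>B. nts_of b = [B] \<longrightarrow> holesOf (ctxT rf b) = [0..<Suc (rf B)])"
    using Intc.IH(2) Intc.prems(1) pb by auto
  have j: "1 \<le> j" "j \<le> trank rf a" using Intc.prems(1) by auto
  have ne: "ev b z \<noteq> []" using B by auto
  have jl: "j < length (ev a z)" using A j by simp
  have jc: "j \<le> cntS (ctxT rf a)" using A j by simp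
  have H: "(holesOf (ctxT rf b) = [] \<longrightarrow> holesOf (replS j (ctxT rf a) (ctxT rf b)) = holesOf (ctxT rf a)) \<and>
    (holesOf (ctxT rf a) = [] \<longrightarrow> holesOf (replS j (ctxT rf a) (ctxT rf b)) = holesOf (ctxT rf b))"
    using holesOf_replS[OF j(1) jc] .
  have l: "length (ev (Intc j a b) z) = Suc (trank rf (Intc j a b))"
    using A B ne j jl by (simp add: length_tintc)
  have f: "flat (ev (Intc j a b) z) = apT (ctxT rf (Intc j a b)) z"
    using A B ne j jl jc by (simp add: flat_tintc apT_replS)
  have c: "cntS (ctxT rf (Intc j a b)) = trank rf (Intc j a b)"
    using A B j jc by (simp add: cntS_replS)
  show ?case using l f c Intc.prems(2) H A B by (auto simp: append_eq_Cons_conv simp del: upt_Suc)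
qed

lemma set_flat: "L a \<in> set (flat u) \<Longrightarrow> \<exists>w\<in>set u. a \<in> set w"
proof -
  have "x \<in> set (joinS cs) \<Longrightarrow> x = S \<or> (\<exists>c\<in>set cs. x \<in> set c)" for x :: "'a sy" and cs
    by (induction cs rule: joinS.induct) auto
  then show "L a \<in> set (flat u) \<Longrightarrow> \<exists>w\<in>set u. a \<in> set w" unfolding flat_def by fastforce
qed

lemma flat_syms: "x \<in> set (flat u) \<Longrightarrow> x = S \<or> (\<exists>a. x = L a)"
proof -
  have "x \<in> set (joinS cs) \<Longrightarrow> x = S \<or> (\<exists>c\<in>set cs. x \<in> set c)" for x :: "'a sy" and cs
    by (induction cs rule: joinS.induct) auto
  then show "x \<in> set (flat u) \<Longrightarrow> x = S \<or> (\<exists>a. x = L a)" unfolding flat_def by fastforce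
qed

lemma ctxT_letters: "L a \<in> set (ctxT rf \<alpha>) \<Longrightarrow> \<exists>u\<in>set (leaves \<alpha>). \<exists>w\<in>set u. a \<in> set w"
proof (induction \<alpha>)
  case (Tup u) then show ?case using set_flat by fastforce
next
  case (NT B) then show ?case using set_holes by fastforce
next
  case (Cat a b) then show ?case by auto
next
  case (Intc j a b) then show ?case using set_replS by fastforce
qed

fun splitS :: "'a sy list \<Rightarrow> 'a sy list list" where
  "splitS [] = [[]]"
| "splitS (x # xs) = (if x = S then [] # splitS xs else (x # hd (splitS xs)) # tl (splitS xs))"

lemma splitS_ne[simp]: "splitS s \<noteq> []"
  by (induction s) auto

lemma joinS_Cons_Cons: "joinS ((x # c) # cs) = x # joinS (c # cs)"
  by (cases cs) auto

lemma joinS_splitS[simp]: "joinS (splitS s) = s"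
proof (induction s)
  case (Cons x s)
  show ?case
  proof (cases "x = S")
    case True then show ?thesis using Cons by (simp add: joinS_Cons)
  next
    case False
    have "joinS ((x # hd (splitS s)) # tl (splitS s)) = x # joinS (hd (splitS s) # tl (splitS s))"
      by (rule joinS_Cons_Cons)
    also have "hd (splitS s) # tl (splitS s) = splitS s" by simp
    finally show ?thesis using False Cons by simp
  qed
qed simp

lemma splitS_Sfree: "c \<in> set (splitS s) \<Longrightarrow> S \<notin> set c"
proof (induction s arbitrary: c)
  case (Cons x s)
  then show ?case
    by (cases "splitS s") (auto split: if_splits)
qed simp

lemma splitS_set: "c \<in> set (splitS s) \<Longrightarrow> set c \<subseteq> set s"
proof (induction s arbitrary: c)
  case (Cons x s)
  then show ?case
    by (cases "splitS s") (force split: if_splits)+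
qed simp

lemma hole_mem: "j \<in> set (holesOf T) \<longleftrightarrow> H j \<in> set T"
proof (induction T)
  case (Cons x T) then show ?case by (cases x) auto
qed simp

lemma splitS_nosep: "S \<notin> set c \<Longrightarrow> splitS c = [c]"
  by (induction c) auto

lemma splitS_app_S: "S \<notin> set c \<Longrightarrow> splitS (c @ S # r) = c # splitS r"
  by (induction c) auto

lemma splitS_joinS: "cs \<noteq> [] \<Longrightarrow> (\<forall>c\<in>set cs. S \<notin> set c) \<Longrightarrow> splitS (joinS cs) = cs"
  by (induction cs rule: joinS.induct) (auto simp: splitS_nosep splitS_app_S)

lemma length_splitS: "length (splitS s) = Suc (cntS s)"
proof (induction s)
  case (Cons x s)
  then show ?case by (cases "splitS s"; cases x) auto
qed simp

lemma concat_map_joinS: "g S = [S] \<Longrightarrow> concat (map g (joinS cs)) = joinS (map (\<lambda>c. concat (map g c)) cs)"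
  by (induction cs rule: joinS.induct) auto

definition sepok :: "'a sy list \<Rightarrow> bool" where
  "sepok s \<longleftrightarrow> [] \<notin> set (splitS s)"

definition compT :: "'a sy list \<Rightarrow> 'a sy list list \<Rightarrow> 'a sy list" where
  "compT T cs = concat (map (\<lambda>x. case x of H j \<Rightarrow> cs ! j | y \<Rightarrow> [y]) T)"

lemma compT_simps[simp]: "compT [] cs = []" "compT (S # T) cs = S # compT T cs"
  "compT (L a # T) cs = L a # compT T cs" "compT (H j # T) cs = cs ! j @ compT T cs"
  by (auto simp: compT_def)

lemma S_notin_map_L: "S \<notin> set (map L w)"
  by auto

lemma apT_Sfree: "S \<notin> set c \<Longrightarrow> S \<notin> set (apT c z)"
proof (induction c)
  case (Cons x c) then show ?case by (cases x) auto
qed simp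

lemma flat_split: "z \<noteq> [] \<Longrightarrow> splitS (flat z) = map (map L) z"
  unfolding flat_def by (rule splitS_joinS) auto

lemma F1:
  assumes "flat Z = apT C z''" "Z \<noteq> []"
  shows "length Z = length (splitS C) \<and> (\<forall>j<length Z. map L (Z ! j) = apT (splitS C ! j) z'')"
proof -
  have e0: "apT C z'' = joinS (map (\<lambda>c. apT c z'') (splitS C))" by (metis apT_joinS joinS_splitS)
  have "map (map L) Z = splitS (joinS (map (\<lambda>c. apT c z'') (splitS C)))"
    using assms flat_split e0 by metis
  also have "\<dots> = map (\<lambda>c. apT c z'') (splitS C)"
    by (rule splitS_joinS) (auto simp: apT_Sfree splitS_Sfree)
  finally have e: "map (map L) Z = map (\<lambda>c. apT c z'') (splitS C)" .
  then have "length Z = length (splitS C)" by (metis length_map)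
  moreover have "\<forall>j<length Z. map L (Z ! j) = apT (splitS C ! j) z''"
    using e calculation by (metis nth_map)
  ultimately show ?thesis by blast
qed

lemma F2:
  assumes "\<forall>j. H j \<in> set T \<longrightarrow> j < length Z \<and> map L (Z ! j) = apT (cs ! j) z''"
  shows "apT T Z = apT (compT T cs) z''"
  using assms
proof (induction T)
  case (Cons x T) then show ?case by (cases x) auto
qed simp

lemma F3:
  assumes "\<forall>i. H i \<in> set X \<longrightarrow> \<not> kp (H i) \<longrightarrow> z'' ! i = []" "\<forall>y. y \<noteq> S \<longrightarrow> (\<forall>i. y \<noteq> H i) \<longrightarrow> kp y"
    "kp S"
  shows "apT (filter kp X) z'' = apT X z''"
  using assms
proof (induction X)
  case (Cons x X) then show ?case by (cases x) auto
qed simp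

lemma holesOf_filter: "holesOf (filter kp X) = filter (\<lambda>i. kp (H i)) (holesOf X)"
proof (induction X)
  case (Cons x X) then show ?case by (cases x) auto
qed simp

lemma holesOf_compT: "holesOf (compT T cs) = concat (map (\<lambda>j. holesOf (cs ! j)) (holesOf T))"
proof (induction T)
  case (Cons x T) then show ?case by (cases x) auto
qed simp

lemma nL_compT: "nL (compT T cs) = nL T + sum_list (map (\<lambda>j. nL (cs ! j)) (holesOf T))"
proof (induction T)
  case (Cons x T) then show ?case by (cases x) auto
qed simp

lemma filter_concat_filter:
  "\<forall>x\<in>set xs. \<not> P x \<longrightarrow> filter Q (f x) = [] \<Longrightarrow>
   filter Q (concat (map f (filter P xs))) = filter Q (concat (map f xs))"
  by (induction xs) auto

lemma sum_filter_le: "sum_list (map (f :: _ \<Rightarrow> nat) (filter P xs)) \<le> sum_list (map f xs)"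
  by (induction xs) auto

lemma apT_nil: "apT c z = [] \<Longrightarrow> x \<in> set c \<Longrightarrow> (\<exists>i. x = H i \<and> z ! i = [])"
proof (induction c)
  case (Cons y c) then show ?case by (cases y) auto
qed simp

lemma apT_allholes: "(\<forall>x\<in>set c. \<exists>i. x = H i \<and> z ! i = []) \<Longrightarrow> apT c z = []"
proof (induction c)
  case (Cons y c) then show ?case by auto
qed simp

lemma nL_zero: "nL T = 0 \<Longrightarrow> x \<in> set T \<Longrightarrow> x = S \<or> (\<exists>i. x = H i)"
proof (induction T)
  case (Cons y T) then show ?case by (cases y) (auto split: if_splits)
qed simp

lemma nL_filter_le: "nL (filter P X) \<le> nL X"
proof (induction X)
  case (Cons x X) then show ?case by (cases x) auto
qed simp

definition keepf :: "'a tuple \<Rightarrow> 'a sy \<Rightarrow> bool" where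
  "keepf z' x = (case x of H i \<Rightarrow> z' ! i \<noteq> [] | _ \<Rightarrow> True)"

lemma keepf_simps[simp]: "keepf z' (H i) = (z' ! i \<noteq> [])" "keepf z' S" "keepf z' (L a)"
  by (auto simp: keepf_def)

lemma descend:
  assumes flatz: "flat z = apT C z'" and zne: "z \<noteq> []"
    and hC: "holesOf C = [0..<length z']"
    and Tsep: "sepok T" and hT: "holesOf T = filter (\<lambda>i. z ! i \<noteq> []) [0..<length z]"
    and Tlet: "nL T = 0"
  defines "W \<equiv> filter (keepf z') (compT T (splitS C))"
  shows "apT W z' = apT T z" "sepok W" "holesOf W = filter (\<lambda>i. z' ! i \<noteq> []) [0..<length z']"
    "cntS W = cntS T" "nL W \<le> nL C" "set W \<subseteq> set C \<union> {S}"
    "\<And>z'' Z. length z'' = length z' \<Longrightarrow> (\<forall>i<length z''. H i \<notin> set W \<longrightarrow> z'' ! i = []) \<Longrightarrow>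
        flat Z = apT C z'' \<Longrightarrow> Z \<noteq> [] \<Longrightarrow>
        apT W z'' = apT T Z \<and> (\<forall>j<length Z. H j \<notin> set T \<longrightarrow> Z ! j = [])"
proof -
  define cs where "cs = splitS C"
  have f1: "length z = length cs" "\<forall>j<length z. map L (z ! j) = apT (cs ! j) z'"
    using F1[OF flatz zne] cs_def by auto
  have HT: "H j \<in> set T \<Longrightarrow> j < length z \<and> z ! j \<noteq> []" for j
  proof -
    assume "H j \<in> set T"
    then have "j \<in> set (holesOf T)" by (simp add: hole_mem)
    then show ?thesis using hT by auto
  qed
  have CH: "H i \<in> set C \<Longrightarrow> i < length z'" for i
  proof -
    assume "H i \<in> set C"
    then have "i \<in> set (holesOf C)" by (simp add: hole_mem)
    then show ?thesis using hC by auto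
  qed
  have csC: "j < length cs \<Longrightarrow> set (cs ! j) \<subseteq> set C" for j
    using splitS_set cs_def by (metis nth_mem)
  have csS: "j < length cs \<Longrightarrow> S \<notin> set (cs ! j)" for j
    using splitS_Sfree cs_def by (metis nth_mem)
  have empt: "j < length z \<Longrightarrow> z ! j = [] \<Longrightarrow> x \<in> set (cs ! j) \<Longrightarrow> \<exists>i. x = H i \<and> z' ! i = []" for j x
    using f1 apT_nil by (metis map_is_Nil_conv)
  have W_notin: "i < length z' \<Longrightarrow> H i \<in> set (compT T cs) \<Longrightarrow> z' ! i = [] \<Longrightarrow> H i \<notin> set W" for i
    unfolding W_def cs_def by auto
  have gen: "apT W z'' = apT T Z \<and> (\<forall>j<length Z. H j \<notin> set T \<longrightarrow> Z ! j = [])"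
    if l: "length z'' = length z'" and c: "\<forall>i<length z''. H i \<notin> set W \<longrightarrow> z'' ! i = []"
      and fZ: "flat Z = apT C z''" and Zne: "Z \<noteq> []" for z'' Z
  proof -
    have fZ1: "length Z = length cs" "\<forall>j<length Z. map L (Z ! j) = apT (cs ! j) z''"
      using F1[OF fZ Zne] cs_def by auto
    have a1: "apT T Z = apT (compT T cs) z''"
      by (rule F2) (use HT f1 fZ1 in auto)
    have hcs: "H i \<in> set (compT T cs) \<Longrightarrow> i < length z'" for i
    proof -
      assume "H i \<in> set (compT T cs)"
      then obtain y where y: "y \<in> set T" "H i \<in> set (case y of H j \<Rightarrow> cs ! j | y \<Rightarrow> [y])"
        unfolding compT_def by auto
      have "\<exists>j. y = H j" using y(2) by (cases y) simp_all
      then obtain j where "y = H j" by blast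
      then have "H i \<in> set C" using y csC HT f1 by auto
      then show ?thesis by (rule CH)
    qed
    have a2: "apT W z'' = apT (compT T cs) z''"
      unfolding W_def cs_def[symmetric]
      by (rule F3) (use c l hcs W_notin in \<open>auto simp: keepf_def cs_def split: sy.splits\<close>)
    have a3: "Z ! j = []" if j: "j < length Z" "H j \<notin> set T" for j
    proof -
      have zj: "z ! j = []" using j hT f1 fZ1
      proof -
        have "j \<notin> set (holesOf T)"
        proof
          assume "j \<in> set (holesOf T)"
          then have "H j \<in> set T" by (simp add: hole_mem)
          with j show False by simp
        qed
        then show ?thesis using hT j f1 fZ1 by auto
      qed
      have "\<forall>x\<in>set (cs ! j). \<exists>i. x = H i \<and> z'' ! i = []"
      proof
        fix x assume xin: "x \<in> set (cs ! j)"
        obtain i where i: "x = H i" "z' ! i = []" using empt[OF _ zj xin] j f1 fZ1 by auto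
        have il: "i < length z'" using CH csC xin i j fZ1 by auto
        have "H i \<notin> set W" unfolding W_def cs_def[symmetric] using i by auto
        then show "\<exists>i. x = H i \<and> z'' ! i = []" using c i il l by auto
      qed
      then have "apT (cs ! j) z'' = []" by (rule apT_allholes)
      then show ?thesis using fZ1 j by (metis map_is_Nil_conv)
    qed
    show ?thesis using a1 a2 a3 by simp
  qed
  show "\<And>z'' Z. length z'' = length z' \<Longrightarrow> (\<forall>i<length z''. H i \<notin> set W \<longrightarrow> z'' ! i = []) \<Longrightarrow>
        flat Z = apT C z'' \<Longrightarrow> Z \<noteq> [] \<Longrightarrow>
        apT W z'' = apT T Z \<and> (\<forall>j<length Z. H j \<notin> set T \<longrightarrow> Z ! j = [])"
    using gen by blast
  have spec_c: "\<forall>i<length z'. H i \<notin> set W \<longrightarrow> z' ! i = []"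
  proof (intro allI impI)
    fix i assume il: "i < length z'" and nW: "H i \<notin> set W"
    show "z' ! i = []"
    proof (cases "H i \<in> set (compT T cs)")
      case True then show ?thesis using nW unfolding W_def cs_def by auto
    next
      case False
      have "i \<in> set (holesOf C)" using hC il by simp
      then have "H i \<in> set C" by (simp add: hole_mem)
      then have "H i \<in> set (joinS cs)" unfolding cs_def by simp
      then obtain j where j: "j < length cs" "H i \<in> set (cs ! j)"
      proof -
        have "x \<in> set (joinS ds) \<Longrightarrow> x = S \<or> (\<exists>d\<in>set ds. x \<in> set d)" for x :: "'a sy" and ds
          by (induction ds rule: joinS.induct) auto
        then obtain d where "d \<in> set cs" "H i \<in> set d" using \<open>H i \<in> set (joinS cs)\<close> by blast
        then obtain j where "j < length cs" "cs ! j = d" by (auto simp: in_set_conv_nth)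
        then show ?thesis using that \<open>H i \<in> set d\<close> by blast
      qed
      have "H j \<notin> set T"
      proof
        assume "H j \<in> set T"
        then have "H i \<in> set (compT T cs)" unfolding compT_def using j by force
        with False show False by simp
      qed
      then have "z ! j = []"
      proof -
        have "j \<notin> set (holesOf T)"
        proof
          assume "j \<in> set (holesOf T)"
          then have "H j \<in> set T" by (simp add: hole_mem)
          with \<open>H j \<notin> set T\<close> show False by simp
        qed
        then show ?thesis using hT j f1 by auto
      qed
      then show ?thesis using empt[of j "H i"] j f1 by auto
    qed
  qed
  show A: "apT W z' = apT T z" using gen[OF refl spec_c flatz zne] by simp
  show "holesOf W = filter (\<lambda>i. z' ! i \<noteq> []) [0..<length z']"
  proof -
    have "holesOf W = filter (\<lambda>i. z' ! i \<noteq> []) (concat (map (\<lambda>j. holesOf (cs ! j)) (holesOf T)))"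
      unfolding W_def cs_def[symmetric] holesOf_filter holesOf_compT by simp
    also have "\<dots> = filter (\<lambda>i. z' ! i \<noteq> []) (concat (map (\<lambda>j. holesOf (cs ! j)) [0..<length z]))"
      unfolding hT
    proof (rule filter_concat_filter, intro ballI impI)
      fix j assume j: "j \<in> set [0..<length z]" "\<not> z ! j \<noteq> []"
      have "\<forall>i\<in>set (holesOf (cs ! j)). z' ! i = []"
      proof
        fix i assume "i \<in> set (holesOf (cs ! j))"
        then have "H i \<in> set (cs ! j)" by (simp add: hole_mem)
        then show "z' ! i = []" using empt[of j "H i"] j by auto
      qed
      then show "filter (\<lambda>i. z' ! i \<noteq> []) (holesOf (cs ! j)) = []" by (simp add: filter_empty_conv)
    qed
    also have "concat (map (\<lambda>j. holesOf (cs ! j)) [0..<length z]) = concat (map holesOf cs)"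
    proof -
      have "map (\<lambda>j. holesOf (cs ! j)) [0..<length cs] = map holesOf cs" by (rule nth_equalityI) auto
      then show ?thesis using f1 by simp
    qed
    also have "\<dots> = holesOf C" unfolding cs_def by (metis holesOf_joinS joinS_splitS)
    finally show ?thesis using hC by simp
  qed
  show "cntS W = cntS T"
  proof -
    define g where "g = (\<lambda>x. filter (keepf z') (case x of H j \<Rightarrow> cs ! j | y \<Rightarrow> [y]))"
    have "W = concat (map g T)" unfolding W_def compT_def g_def cs_def by (simp add: filter_concat comp_def)
    moreover have "cntS (concat (map g T)) = cntS T"
      using HT f1
    proof (induction T)
      case (Cons x T)
      have "cntS (g x) = (if x = S then 1 else 0)"
      proof (cases x)
        case (H j)
        then have "j < length cs" using Cons f1 by auto
        then have "S \<notin> set (g x)" using csS H g_def by auto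
        then show ?thesis using H by (auto simp: cntS_def filter_empty_conv)
      qed (auto simp: g_def)
      then show ?case using Cons by (auto simp: cntS_def)
    qed simp
    ultimately show ?thesis by simp
  qed
  show "nL W \<le> nL C"
  proof -
    have "nL W \<le> nL (compT T cs)" unfolding W_def cs_def by (rule nL_filter_le)
    also have "\<dots> = sum_list (map (\<lambda>j. nL (cs ! j)) (holesOf T))" using nL_compT[of T cs] Tlet by linarith
    also have "\<dots> \<le> sum_list (map (\<lambda>j. nL (cs ! j)) [0..<length z])" unfolding hT by (rule sum_filter_le)
    also have "\<dots> = sum_list (map nL cs)"
    proof -
      have "map (\<lambda>j. nL (cs ! j)) [0..<length cs] = map nL cs" by (rule nth_equalityI) auto
      then show ?thesis using f1 by simp
    qed
    also have "\<dots> = nL C" unfolding cs_def by (metis nL_joinS joinS_splitS)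
    finally show ?thesis .
  qed
  show "set W \<subseteq> set C \<union> {S}"
  proof
    fix x assume "x \<in> set W"
    then have "x \<in> set (compT T cs)" unfolding W_def cs_def by simp
    then obtain y where y: "y \<in> set T" "x \<in> set (case y of H j \<Rightarrow> cs ! j | y \<Rightarrow> [y])"
      unfolding compT_def by auto
    show "x \<in> set C \<union> {S}"
    proof (cases y)
      case (H j) then show ?thesis using y HT f1 csC by auto
    next
      case S then show ?thesis using y by auto
    next
      case (L a) then show ?thesis using y nL_zero[OF Tlet] by auto
    qed
  qed
  show "sepok W"
  proof -
    define g where "g = (\<lambda>x. filter (keepf z') (case x of H j \<Rightarrow> cs ! j | y \<Rightarrow> [y]))"
    have W: "W = concat (map g T)" unfolding W_def compT_def g_def cs_def by (simp add: filter_concat comp_def)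
    have gS: "g S = [S]" by (simp add: g_def)
    have W2: "W = joinS (map (\<lambda>c. concat (map g c)) (splitS T))"
      using W concat_map_joinS[of g "splitS T", OF gS] by simp
    have gSfree: "x \<in> set T \<Longrightarrow> x \<noteq> S \<Longrightarrow> S \<notin> set (g x)" for x
      using csS HT f1 by (cases x) (auto simp: g_def)
    have gne: "x \<in> set T \<Longrightarrow> x \<noteq> S \<Longrightarrow> g x \<noteq> []" for x
    proof (cases x)
      case (H j)
      assume xT: "x \<in> set T"
      then have jz: "j < length z" "z ! j \<noteq> []" using HT H by auto
      have "apT (g x) z' = apT (cs ! j) z'"
        unfolding g_def H by (simp, rule F3) (auto simp: keepf_def split: sy.splits)
      then show ?thesis using jz f1 by auto
    qed (auto simp: g_def)
    have comps: "\<forall>c\<in>set (splitS T). S \<notin> set (concat (map g c)) \<and> concat (map g c) \<noteq> []"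
    proof
      fix c assume cin: "c \<in> set (splitS T)"
      have cT: "set c \<subseteq> set T" using splitS_set[OF cin] .
      have cS: "S \<notin> set c" using splitS_Sfree[OF cin] .
      have cne: "c \<noteq> []" using cin Tsep unfolding sepok_def by auto
      show "S \<notin> set (concat (map g c)) \<and> concat (map g c) \<noteq> []"
        using cT cS cne gSfree gne by (cases c) auto
    qed
    have "splitS W = map (\<lambda>c. concat (map g c)) (splitS T)"
      unfolding W2 by (rule splitS_joinS) (use comps in auto)
    then show ?thesis unfolding sepok_def using comps by auto
  qed
qed

definition peelrel :: "'a sy list \<Rightarrow> 'a sy list \<Rightarrow> 'a tuple \<Rightarrow> bool" where
  "peelrel T T' u \<longleftrightarrow> (\<exists>a. L a \<in> set T \<and> u \<in> {[[a]], [[a],[]], [[],[a]], [[],[a],[]]}) \<and>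
     (T = flat u @ T' \<or> T = T' @ flat u \<or> (\<exists>P Q. T' = P @ S # Q \<and> T = P @ flat u @ Q))"

lemma flat_units[simp]: "flat [[a]] = [L a]" "flat [[a],[]] = [L a, S]" "flat [[],[a]] = [S, L a]"
  "flat [[],[a],[]] = [S, L a, S]"
  by (auto simp: flat_def)

lemma sepok_joinS: "cs \<noteq> [] \<Longrightarrow> \<forall>c\<in>set cs. c \<noteq> [] \<and> S \<notin> set c \<Longrightarrow> sepok (joinS cs)"
  unfolding sepok_def by (subst splitS_joinS) auto

lemma cntS_joinS': "\<forall>c\<in>set cs. c \<noteq> [] \<and> S \<notin> set c \<Longrightarrow> cntS (joinS cs) = length cs - 1"
  by (rule cntS_joinS) auto

lemma sum_ge: "\<forall>x\<in>set xs. (1::nat) \<le> f x \<Longrightarrow> \<exists>x\<in>set xs. 2 \<le> f x \<Longrightarrow> Suc (length xs) \<le> sum_list (map f xs)"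
proof (induction xs)
  case (Cons y xs)
  show ?case
  proof (cases "2 \<le> f y")
    case True
    have "length xs \<le> sum_list (map f xs)" using Cons.prems(1)
      by (induction xs) (auto simp: Suc_le_eq)
    then show ?thesis using True by simp
  next
    case False
    then have "\<exists>x\<in>set xs. 2 \<le> f x" using Cons.prems by auto
    then show ?thesis using Cons by fastforce
  qed
qed simp

lemma peel:
  assumes sep: "sepok T" and cS: "cntS T \<le> k" and nH: "length (holesOf T) \<le> Suc k"
    and nl: "1 \<le> nL T" and notone: "\<forall>a. T \<noteq> [L a]"
  shows "\<exists>T' u. sepok T' \<and> cntS T' \<le> k \<and> peelrel T T' u"
proof -
  define cs where "cs = splitS T"
  have Tj: "T = joinS cs" unfolding cs_def by simp
  have cne: "cs \<noteq> []" unfolding cs_def by simp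
  have cok: "\<forall>c\<in>set cs. c \<noteq> [] \<and> S \<notin> set c"
    using sep splitS_Sfree unfolding sepok_def cs_def by blast
  have lcs: "length cs = Suc (cntS T)" unfolding cs_def by (rule length_splitS)
  have Lin: "L a \<in> set c \<Longrightarrow> c \<in> set cs \<Longrightarrow> L a \<in> set T" for a c
    using splitS_set cs_def by blast
  show ?thesis
  proof (cases "\<exists>a c rest. cs = (L a # c) # rest")
    case True
    then obtain a c rest where e: "cs = (L a # c) # rest" by blast
    have La: "L a \<in> set T" by (rule Lin[of a "L a # c"]) (auto simp: e)
    show ?thesis
    proof (cases "c = []")
      case True
      have rne: "rest \<noteq> []" using notone Tj e True by auto
      have T: "T = [L a, S] @ joinS rest" using Tj e True rne by (simp add: joinS_Cons)
      have "sepok (joinS rest)" using rne cok e by (intro sepok_joinS) auto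
      moreover have "cntS (joinS rest) \<le> k" using cS T by simp
      moreover have "peelrel T (joinS rest) [[a],[]]" unfolding peelrel_def using T La by auto
      ultimately show ?thesis by blast
    next
      case False
      have T: "T = L a # joinS (c # rest)" using Tj e by (simp add: joinS_Cons_Cons)
      have "sepok (joinS (c # rest))" using False cok e by (intro sepok_joinS) auto
      moreover have "cntS (joinS (c # rest)) \<le> k" using cS T by simp
      moreover have "peelrel T (joinS (c # rest)) [[a]]" unfolding peelrel_def using T La by auto
      ultimately show ?thesis by blast
    qed
  next
    case notA: False
    show ?thesis
    proof (cases "\<exists>a c rest. cs = rest @ [c @ [L a]]")
      case True
      then obtain a c rest where e: "cs = rest @ [c @ [L a]]" by blast
      have La: "L a \<in> set T" by (rule Lin[of a "c @ [L a]"]) (auto simp: e)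
      show ?thesis
      proof (cases "c = []")
        case True
        have rne: "rest \<noteq> []" using notone Tj e True by auto
        have T: "T = joinS rest @ [S, L a]" using Tj e True rne by (simp add: joinS_append)
        have "sepok (joinS rest)" using rne cok e by (intro sepok_joinS) auto
        moreover have "cntS (joinS rest) \<le> k" using cS T by simp
        moreover have "peelrel T (joinS rest) [[],[a]]" unfolding peelrel_def using T La by auto
        ultimately show ?thesis by blast
      next
        case False
        have T: "T = joinS (rest @ [c]) @ [L a]" using Tj e joinS_merge[of rest c "[L a]" "[]"] by simp
        have "sepok (joinS (rest @ [c]))" using False cok e by (intro sepok_joinS) auto
        moreover have "cntS (joinS (rest @ [c])) \<le> k" using cS T by simp
        moreover have "peelrel T (joinS (rest @ [c])) [[a]]" unfolding peelrel_def using T La by auto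
        ultimately show ?thesis by blast
      qed
    next
      case notB: False
      show ?thesis
      proof (cases "\<exists>pre a c post. cs = pre @ (L a # c) # post \<and> pre \<noteq> [] \<and> (c \<noteq> [] \<or> post \<noteq> [])")
        case True
        then obtain pre a c post where e: "cs = pre @ (L a # c) # post" "pre \<noteq> []" "c \<noteq> [] \<or> post \<noteq> []"
          by blast
        have La: "L a \<in> set T" by (rule Lin[of a "L a # c"]) (auto simp: e)
        show ?thesis
        proof (cases "c = []")
          case False
          have T': "joinS (pre @ c # post) = joinS pre @ S # joinS (c # post)"
            using e by (simp add: joinS_append)
          have T: "T = joinS pre @ [S, L a] @ joinS (c # post)"
            using Tj e by (simp add: joinS_append joinS_Cons_Cons)
          have "sepok (joinS (pre @ c # post))" using False cok e by (intro sepok_joinS) auto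
          moreover have "cntS (joinS (pre @ c # post)) \<le> k" using cS T T' by simp
          moreover have "peelrel T (joinS (pre @ c # post)) [[],[a]]"
            unfolding peelrel_def using T T' La by auto
          ultimately show ?thesis by blast
        next
          case True
          with e have pne: "post \<noteq> []" by simp
          have T': "joinS (pre @ post) = joinS pre @ S # joinS post"
            using e pne by (simp add: joinS_append)
          have T: "T = joinS pre @ [S, L a, S] @ joinS post"
            using Tj e True pne by (simp add: joinS_append joinS_Cons)
          have "sepok (joinS (pre @ post))" using cok e by (intro sepok_joinS) auto
          moreover have "cntS (joinS (pre @ post)) \<le> k" using cS T T' by simp
          moreover have "peelrel T (joinS (pre @ post)) [[],[a],[]]"
            unfolding peelrel_def using T T' La by auto
          ultimately show ?thesis by blast
        qed
      next
        case notC: False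
        show ?thesis
        proof (cases "\<exists>pre a c post. cs = pre @ (c @ [L a]) # post \<and> post \<noteq> [] \<and> c \<noteq> []")
          case True
          then obtain pre a c post where e: "cs = pre @ (c @ [L a]) # post" "post \<noteq> []" "c \<noteq> []"
            by blast
          have La: "L a \<in> set T" by (rule Lin[of a "c @ [L a]"]) (auto simp: e)
          have T': "joinS (pre @ c # post) = joinS (pre @ [c]) @ S # joinS post"
            using e joinS_append[of "pre @ [c]" post] by simp
          have T: "T = joinS (pre @ [c]) @ [L a, S] @ joinS post"
          proof -
            have "T = joinS ((pre @ [c @ [L a]]) @ post)" using Tj e by simp
            also have "\<dots> = joinS (pre @ [c @ [L a]]) @ S # joinS post"
              using e by (intro joinS_append) auto
            also have "joinS (pre @ [c @ [L a]]) = joinS (pre @ [c]) @ [L a]"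
              using joinS_merge[of pre c "[L a]" "[]"] by simp
            finally show ?thesis by simp
          qed
          have "sepok (joinS (pre @ c # post))" using cok e by (intro sepok_joinS) auto
          moreover have "cntS (joinS (pre @ c # post)) \<le> k" using cS T T' by simp
          moreover have "peelrel T (joinS (pre @ c # post)) [[a],[]]"
            unfolding peelrel_def using T T' La by auto
          ultimately show ?thesis by blast
        next
          case notC': False
          have dec: "i < length cs \<Longrightarrow> cs = take i cs @ (cs ! i) # drop (Suc i) cs" for i
            by (simp add: id_take_nth_drop)
          have hdH: "\<exists>h. hd (cs ! i) = H h" if i: "i < length cs" for i
          proof -
            have ci: "cs ! i \<noteq> []" "S \<notin> set (cs ! i)" using cok i by auto
            show ?thesis
            proof (cases "hd (cs ! i)")
              case (L a)
              then obtain c where c: "cs ! i = L a # c" using ci by (cases "cs ! i") auto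
              show ?thesis
              proof (cases "i = 0")
                case True then show ?thesis using notA c dec[OF i(1)] by auto
              next
                case False
                then have pre: "take i cs \<noteq> []" using i by auto
                show ?thesis
                proof (cases "c \<noteq> [] \<or> drop (Suc i) cs \<noteq> []")
                  case True
                  have "cs = take i cs @ (L a # c) # drop (Suc i) cs" using c dec[OF i(1)] by simp
                  then have False using notC pre True by blast
                  then show ?thesis ..
                next
                  case False
                  then have "cs = take i cs @ [[] @ [L a]]" using c dec[OF i(1)] by simp
                  then show ?thesis using notB by blast
                qed
              qed
            next
              case S then show ?thesis using ci by (metis list.set_sel(1))
            qed auto
          qed
          have lastH: "\<exists>h. last (cs ! i) = H h" if i: "i < length cs" for i
          proof -
            have ci: "cs ! i \<noteq> []" "S \<notin> set (cs ! i)" using cok i by auto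
            show ?thesis
            proof (cases "last (cs ! i)")
              case (L a)
              then obtain c where c: "cs ! i = c @ [L a]" using ci by (metis append_butlast_last_id)
              show ?thesis
              proof (cases "drop (Suc i) cs = []")
                case True
                then have "cs = take i cs @ [c @ [L a]]" using c dec[OF i(1)] by simp
                then show ?thesis using notB by blast
              next
                case False
                show ?thesis
                proof (cases "c = []")
                  case False
                  have "cs = take i cs @ (c @ [L a]) # drop (Suc i) cs" using c dec[OF i(1)] by simp
                  then have False using notC' \<open>drop (Suc i) cs \<noteq> []\<close> False by blast
                  then show ?thesis ..
                next
                  case True
                  then show ?thesis using hdH[OF i(1)] c by simp
                qed
              qed
            next
              case S then show ?thesis using ci by (metis last_in_set)
            qed auto
          qed
          have "filter isL T \<noteq> []" using nl unfolding nL_def by auto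
          then have "\<exists>x\<in>set T. isL x" by (auto simp: filter_empty_conv)
          then obtain x where x: "x \<in> set T" "isL x" by blast
          then obtain c0 where c0: "c0 \<in> set cs" "x \<in> set c0"
          proof -
            have "y \<in> set (joinS ds) \<Longrightarrow> y = S \<or> (\<exists>d\<in>set ds. y \<in> set d)" for y :: "'a sy" and ds
              by (induction ds rule: joinS.induct) auto
            moreover have "x \<noteq> S" using x(2) by auto
            ultimately show ?thesis using x Tj that by blast
          qed
          then obtain i where i: "i < length cs" "cs ! i = c0" by (auto simp: in_set_conv_nth)
          have "\<exists>x\<in>set (cs ! i). isL x" using c0 i x by auto
          then have "\<exists>p y q. cs ! i = p @ y # q \<and> isL y \<and> (\<forall>z\<in>set p. \<not> isL z)"
            by (rule split_list_first_prop)
          then obtain p y q where pyq: "cs ! i = p @ y # q" "isL y" "\<forall>z\<in>set p. \<not> isL z"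
            by blast
          obtain a where ya: "y = L a" using pyq(2) by (cases y) auto
          have pne: "p \<noteq> []" using hdH[OF i(1)] pyq ya by (cases p) auto
          have qne: "q \<noteq> []" using lastH[OF i(1)] pyq ya by (cases q) auto
          define pre where "pre = take i cs"
          define post where "post = drop (Suc i) cs"
          have e: "cs = pre @ (p @ L a # q) # post" using dec[OF i(1)] pyq ya pre_def post_def by simp
          have La: "L a \<in> set T" by (rule Lin[of a "p @ L a # q"]) (auto simp: e)
          have T': "joinS (pre @ p # q # post) = joinS (pre @ [p]) @ S # joinS (q # post)"
            using joinS_append[of "pre @ [p]" "q # post"] by simp
          have T: "T = joinS (pre @ [p]) @ [L a] @ joinS (q # post)"
          proof -
            have "joinS (pre @ [p]) @ joinS ((L a # q) # post) = joinS (pre @ [p @ (L a # q)] @ post)"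
              by (rule joinS_merge)
            then show ?thesis using Tj e by (simp add: joinS_Cons_Cons)
          qed
          have pqS: "S \<notin> set p" "S \<notin> set q" using cok e by auto
          have "sepok (joinS (pre @ p # q # post))" using cok e pne qne pqS by (intro sepok_joinS) auto
          moreover have "cntS (joinS (pre @ p # q # post)) \<le> k"
          proof -
            have c1: "cntS (joinS (pre @ p # q # post)) = Suc (length pre + length post)"
              using cok e pne qne pqS by (subst cntS_joinS') auto
            have "length (holesOf T) = sum_list (map (\<lambda>c. length (holesOf c)) cs)"
              unfolding Tj holesOf_joinS by (simp add: length_concat comp_def)
            moreover have "Suc (length cs) \<le> sum_list (map (\<lambda>c. length (holesOf c)) cs)"
            proof (rule sum_ge)
              show "\<forall>x\<in>set cs. 1 \<le> length (holesOf x)"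
              proof
                fix c assume "c \<in> set cs"
                then obtain j where j: "j < length cs" "cs ! j = c" by (auto simp: in_set_conv_nth)
                obtain h where "hd c = H h" using hdH[OF j(1)] j by auto
                moreover have "c \<noteq> []" using cok \<open>c \<in> set cs\<close> by auto
                ultimately show "1 \<le> length (holesOf c)" by (cases c) auto
              qed
              show "\<exists>x\<in>set cs. 2 \<le> length (holesOf x)"
              proof
                obtain h where "hd (cs ! i) = H h" using hdH[OF i(1)] by auto
                then have hp: "hd p = H h" using pne pyq by simp
                obtain h' where "last (cs ! i) = H h'" using lastH[OF i(1)] by auto
                then have hq: "last q = H h'" using qne pyq by simp
                have "1 \<le> length (holesOf p)" using hp pne by (cases p) auto
                moreover
                have qq: "q = butlast q @ [H h']" using hq qne by (metis append_butlast_last_id)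
                have "holesOf q = holesOf (butlast q @ [H h'])" using qq by (rule arg_cong)
                then have "holesOf q = holesOf (butlast q) @ [h']" by simp
                then have "1 \<le> length (holesOf q)" by simp
                ultimately show "2 \<le> length (holesOf (cs ! i))" using pyq ya by simp
                show "cs ! i \<in> set cs" using i by (metis nth_mem)
              qed
            qed
            ultimately have "Suc (length cs) \<le> Suc k" using nH by simp
            then show ?thesis using c1 e by simp
          qed
          moreover have "peelrel T (joinS (pre @ p # q # post)) [[a]]"
            unfolding peelrel_def using T T' La by auto
          ultimately show ?thesis by blast
        qed
      qed
    qed
  qed
qed

lemma set_joinS_nonS: "x \<noteq> S \<Longrightarrow> x \<in> set (joinS cs) \<longleftrightarrow> (\<exists>c\<in>set cs. x \<in> set c)"
  by (induction cs rule: joinS.induct) auto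

lemma L_in_flat: "L a \<in> set (flat z) \<longleftrightarrow> (\<exists>w\<in>set z. a \<in> set w)"
  unfolding flat_def by (subst set_joinS_nonS) auto

lemma L_in_apT: "L a \<in> set (apT T z) \<Longrightarrow> \<forall>i\<in>set (holesOf T). i < length z \<Longrightarrow>
   L a \<in> set T \<or> (\<exists>w\<in>set z. a \<in> set w)"
proof (induction T)
  case (Cons x T)
  show ?case
  proof (cases x)
    case (H i)
    show ?thesis
    proof (cases "L a \<in> set (map L (z ! i))")
      case True
      then have "a \<in> set (z ! i)" by auto
      moreover have "i < length z" using Cons.prems H by simp
      ultimately show ?thesis by (metis nth_mem)
    next
      case False
      then show ?thesis using Cons H by auto
    qed
  qed (use Cons in auto)
qed simp

lemma H_notin_apT: "H i \<notin> set (apT T z)"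
proof (induction T)
  case (Cons x T) then show ?case by (cases x) auto
qed simp

lemma apT_noholes: "holesOf T = [] \<Longrightarrow> apT T z = T"
proof (induction T)
  case (Cons x T) then show ?case by (cases x) auto
qed simp

lemma nL_apT: "nL (apT T z) = nL T + sum_list (map (\<lambda>i. length (z ! i)) (holesOf T))"
proof (induction T)
  case (Cons x T)
  have "nL (map L w) = length w" for w :: "'a list" by (induction w) auto
  with Cons show ?case by (cases x) auto
qed simp

lemma nL_flat: "nL (flat t) = tup_len t"
proof -
  have "nL (map L w) = length w" for w :: "'a list" by (induction w) auto
  then show ?thesis unfolding flat_def tup_len_def nL_joinS by (simp add: comp_def)
qed

lemma length_decomp: "length T = nL T + cntS T + length (holesOf T)"
proof (induction T)
  case (Cons x T) then show ?case by (cases x) auto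
qed simp

lemma flat_inj: "length x = length y \<Longrightarrow> flat x = flat y \<Longrightarrow> x = y"
proof (cases "x = []")
  case True then show "length x = length y \<Longrightarrow> flat x = flat y \<Longrightarrow> x = y" by simp
next
  case False
  assume l: "length x = length y" and f: "flat x = flat y"
  have "y \<noteq> []" using False l by auto
  then have "map (map L) x = map (map L) y" using flat_split[of x] flat_split[of y] False f by auto
  moreover have "inj (map L)" by (simp add: inj_on_def)
  ultimately show "x = y" by (metis list.inj_map_strong inj_eq)
qed

fun unL :: "'a sy \<Rightarrow> 'a" where "unL (L a) = a" | "unL _ = undefined"

definition unflat :: "'a sy list \<Rightarrow> 'a tuple" where
  "unflat s = map (map unL) (splitS s)"

lemma flat_unflat: "\<forall>i. H i \<notin> set s \<Longrightarrow> flat (unflat s) = s"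
proof -
  assume nh: "\<forall>i. H i \<notin> set s"
  have "\<forall>c\<in>set (splitS s). map L (map unL c) = c"
  proof
    fix c assume c: "c \<in> set (splitS s)"
    have "\<forall>x\<in>set c. \<exists>a. x = L a"
    proof
      fix x assume "x \<in> set c"
      then have xs: "x \<in> set s" "x \<noteq> S" using splitS_set[OF c] splitS_Sfree[OF c] by auto
      show "\<exists>a. x = L a"
      proof (cases x)
        case (H i) then show ?thesis using xs nh by blast
      qed (use xs in auto)
    qed
    then show "map L (map unL c) = c" by (induction c) auto
  qed
  then have "map (map L) (map (map unL) (splitS s)) = splitS s"
    by (simp add: map_idI)
  then show ?thesis unfolding flat_def unflat_def by simp
qed

lemma length_unflat: "length (unflat s) = Suc (cntS s)"
  unfolding unflat_def by (simp add: length_splitS)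

lemma correct_nt_le: "correct k rf \<alpha> \<Longrightarrow> B \<in> set (nts_of \<alpha>) \<Longrightarrow> rf B \<le> k"
  by (induction \<alpha>) auto

lemma trank_le: "correct k rf \<alpha> \<Longrightarrow> trank rf \<alpha> \<le> k"
  by (induction \<alpha>) (auto simp: tup_rank_def)

context
  fixes k :: nat and Sig :: "'a set" and G :: "('n, 'a) grammar"
  assumes fin: "finite Sig" and dc: "is_dcfg k Sig G" and lin: "linear_grammar G"
begin

definition syms :: "'n option \<Rightarrow> 'a sy set" where
  "syms ob = L ` Sig \<union> {S} \<union> (case ob of None \<Rightarrow> {} | Some B \<Rightarrow> H ` {..rk G B})"

definition Lmax :: nat where
  "Lmax = Max (insert 0 ((\<lambda>(A, \<alpha>). nL (ctxT (rk G) \<alpha>)) ` rules G))"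

definition Nb :: nat where "Nb = Lmax + k + Suc k"

definition Os :: "'n option set" where "Os = insert None (Some ` nts G)"

definition States :: "('n option \<times> 'a sy list) set" where
  "States = Sigma Os (\<lambda>ob. {T. set T \<subseteq> syms ob \<and> length T \<le> Nb \<and> cntS T \<le> k})"

definition rk1 :: "'n option \<times> 'a sy list \<Rightarrow> nat" where "rk1 X = cntS (snd X)"

fun base :: "'n option \<Rightarrow> 'a tuple \<Rightarrow> bool" where
  "base None z = (z = [])"
| "base (Some B) z = gen (rules G) B z"

definition sem :: "'n option \<times> 'a sy list \<Rightarrow> 'a sy list set" where
  "sem X = {apT (snd X) z | z. base (fst X) z \<and> (\<forall>i<length z. H i \<notin> set (snd X) \<longrightarrow> z ! i = [])}"

definition start1 :: "'n option \<times> 'a sy list" where "start1 = (Some (start G), [H 0])"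

definition U1 :: "'a tuple set" where
  "U1 = {u. tup_len u = 1 \<and> (\<forall>w\<in>set u. set w \<subseteq> Sig) \<and> length u \<le> Suc k}"

definition shp :: "'n option \<times> 'a sy list \<Rightarrow> ('n option \<times> 'a sy list, 'a) tm \<Rightarrow> bool" where
  "shp X rhs \<longleftrightarrow> (\<exists>u Y. u \<in> U1 \<and> Y \<in> States \<and>
       (rhs = Cat (Tup u) (NT Y) \<or> rhs = Cat (NT Y) (Tup u) \<or> (\<exists>j. rhs = Intc j (NT Y) (Tup u))))
     \<or> (\<exists>u\<in>U1. rhs = Tup u) \<or> (X = start1 \<and> rhs = Tup [[]])"

definition sound :: "'n option \<times> 'a sy list \<Rightarrow> ('n option \<times> 'a sy list, 'a) tm \<Rightarrow> bool" where
  "sound X rhs \<longleftrightarrow> (nts_of rhs = [] \<longrightarrow> flat (val rhs) \<in> sem X) \<and>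
     (\<forall>Y. nts_of rhs = [Y] \<longrightarrow> (\<forall>y. length y = Suc (rk1 Y) \<longrightarrow> flat y \<in> sem Y \<longrightarrow> flat (ev rhs y) \<in> sem X))"

definition P1 :: "(('n option \<times> 'a sy list) \<times> ('n option \<times> 'a sy list, 'a) tm) set" where
  "P1 = {(X, rhs). X \<in> States \<and> correct k rk1 rhs \<and> rk1 X = trank rk1 rhs \<and> shp X rhs \<and> sound X rhs}"

lemma dc_rule: "(A, \<alpha>) \<in> rules G \<Longrightarrow> A \<in> nts G \<and> correct k (rk G) \<alpha> \<and> rk G A = trank (rk G) \<alpha> \<and>
    set (nts_of \<alpha>) \<subseteq> nts G \<and> (\<forall>u \<in> set (leaves \<alpha>). tup_len u \<le> 1 \<and> (\<forall>w \<in> set u. set w \<subseteq> Sig))"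
  using dc unfolding is_dcfg_def by fast

lemma lin_rule: "(A, \<alpha>) \<in> rules G \<Longrightarrow> length (nts_of \<alpha>) \<le> 1"
  using lin unfolding linear_grammar_def by blast

lemma ctxT_sig: "(A, \<alpha>) \<in> rules G \<Longrightarrow> L a \<in> set (ctxT (rk G) \<alpha>) \<Longrightarrow> a \<in> Sig"
proof -
  assume r: "(A, \<alpha>) \<in> rules G" and a: "L a \<in> set (ctxT (rk G) \<alpha>)"
  obtain u w where "u \<in> set (leaves \<alpha>)" "w \<in> set u" "a \<in> set w" using ctxT_letters[OF a] by blast
  moreover have "\<forall>u \<in> set (leaves \<alpha>). \<forall>w \<in> set u. set w \<subseteq> Sig" using dc_rule[OF r] by blast
  ultimately show "a \<in> Sig" by blast
qed

lemma gen_props: "gen (rules G) B z \<Longrightarrow>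
   length z = Suc (rk G B) \<and> (\<forall>w\<in>set z. set w \<subseteq> Sig) \<and> B \<in> nts G \<and> rk G B \<le> k"
proof (induction rule: gen.induct)
  case (g0 A \<alpha>)
  note r = dc_rule[OF g0(1)]
  have E: "length (ev \<alpha> []) = Suc (trank (rk G) \<alpha>) \<and> flat (ev \<alpha> []) = apT (ctxT (rk G) \<alpha>) []
     \<and> holesOf (ctxT (rk G) \<alpha>) = []"
    using EV[of k "rk G" \<alpha> "[]"] r g0(2) by auto
  have v: "val \<alpha> = ev \<alpha> []" using val_ev[OF g0(2)] .
  have "\<forall>w\<in>set (val \<alpha>). set w \<subseteq> Sig"
  proof (intro ballI subsetI)
    fix w a assume wa: "w \<in> set (val \<alpha>)" "a \<in> set w"
    have "L a \<in> set (flat (val \<alpha>))" unfolding L_in_flat using wa by blast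
    moreover have "flat (val \<alpha>) = ctxT (rk G) \<alpha>"
      using E v apT_noholes[of "ctxT (rk G) \<alpha>" "[]"] by simp
    ultimately have "L a \<in> set (ctxT (rk G) \<alpha>)" by simp
    then show "a \<in> Sig" using ctxT_sig g0(1) by blast
  qed
  moreover have "rk G A \<le> k" using r trank_le[of k "rk G" \<alpha>] by simp
  ultimately show ?case using E v r by simp
next
  case (g1 A \<alpha> B z)
  note r = dc_rule[OF g1(1)]
  have E: "length (ev \<alpha> z) = Suc (trank (rk G) \<alpha>) \<and> flat (ev \<alpha> z) = apT (ctxT (rk G) \<alpha>) z
     \<and> holesOf (ctxT (rk G) \<alpha>) = [0..<Suc (rk G B)]"
    using EV[of k "rk G" \<alpha> z] r g1.IH g1(2) by auto
  have "\<forall>w\<in>set (ev \<alpha> z). set w \<subseteq> Sig"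
  proof (intro ballI subsetI)
    fix w a assume wa: "w \<in> set (ev \<alpha> z)" "a \<in> set w"
    have "L a \<in> set (flat (ev \<alpha> z))" unfolding L_in_flat using wa by blast
    then have "L a \<in> set (apT (ctxT (rk G) \<alpha>) z)" using E by simp
    moreover have "\<forall>i\<in>set (holesOf (ctxT (rk G) \<alpha>)). i < length z" using E g1.IH by simp
    ultimately have "L a \<in> set (ctxT (rk G) \<alpha>) \<or> (\<exists>w\<in>set z. a \<in> set w)"
      by (rule L_in_apT)
    then show "a \<in> Sig" using ctxT_sig[OF g1(1)] g1.IH by blast
  qed
  moreover have "rk G A \<le> k" using r trank_le[of k "rk G" \<alpha>] by simp
  ultimately show ?case using E r by simp
qed

lemma P1_sound: "gen P1 X y \<Longrightarrow> length y = Suc (rk1 X) \<and> flat y \<in> sem X"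
proof (induction rule: gen.induct)
  case (g0 A \<alpha>)
  then have c: "correct k rk1 \<alpha>" "rk1 A = trank rk1 \<alpha>" "sound A \<alpha>" by (auto simp: P1_def)
  have "length (ev \<alpha> []) = Suc (trank rk1 \<alpha>)" using EV[OF c(1), of "[]"] g0(2) by auto
  moreover have "flat (val \<alpha>) \<in> sem A" using c(3) g0(2) unfolding sound_def by blast
  ultimately show ?case using c g0(2) val_ev[OF g0(2)] by simp
next
  case (g1 A \<alpha> B z)
  then have c: "correct k rk1 \<alpha>" "rk1 A = trank rk1 \<alpha>" "sound A \<alpha>" by (auto simp: P1_def)
  have "length (ev \<alpha> z) = Suc (trank rk1 \<alpha>)" using EV[OF c(1), of z] g1 by auto
  moreover have "flat (ev \<alpha> z) \<in> sem A" using c(3) g1(2) g1.IH unfolding sound_def by blast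
  ultimately show ?case using c by simp
qed


lemma flat_nil_tuple: "flat [[]] = []"
  by (simp add: flat_def)

lemma incl:
  assumes g: "gen P1 Y t" and nl: "1 \<le> nL (flat t)" and sub: "sem Y \<subseteq> sem X"
    and XS: "X \<in> States" and r: "rk1 X = rk1 Y"
  shows "gen P1 X t"
  using g
proof (cases rule: gen.cases)
  case (g0 \<alpha>)
  have m: "Y \<in> States" "correct k rk1 \<alpha>" "rk1 Y = trank rk1 \<alpha>" "shp Y \<alpha>" "sound Y \<alpha>"
    using g0 by (auto simp: P1_def)
  have "\<exists>u\<in>U1. \<alpha> = Tup u"
  proof -
    have "\<not> (Y = start1 \<and> \<alpha> = Tup [[]])"
    proof
      assume "Y = start1 \<and> \<alpha> = Tup [[]]"
      then have "t = [[]]" using g0 by simp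
      then show False using nl by (simp add: flat_nil_tuple)
    qed
    then show ?thesis using m(4) g0(3) unfolding shp_def by auto
  qed
  then have "shp X \<alpha>" unfolding shp_def by blast
  moreover have "sound X \<alpha>" using m(5) sub g0(3) unfolding sound_def by auto
  ultimately have "(X, \<alpha>) \<in> P1" using XS m r by (simp add: P1_def)
  then show ?thesis using g0 gen.g0 by metis
next
  case (g1 \<alpha> B z)
  have m: "Y \<in> States" "correct k rk1 \<alpha>" "rk1 Y = trank rk1 \<alpha>" "shp Y \<alpha>" "sound Y \<alpha>"
    using g1 by (auto simp: P1_def)
  have "shp X \<alpha>" using m(4) g1(3) unfolding shp_def by auto
  moreover have "sound X \<alpha>" using m(5) sub g1(3) unfolding sound_def by blast
  ultimately have "(X, \<alpha>) \<in> P1" using XS m r by (simp add: P1_def)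
  then show ?thesis using g1 gen.g1 by metis
qed

lemma States_D: "(ob, T) \<in> States \<Longrightarrow> set T \<subseteq> syms ob \<and> length T \<le> Nb \<and> cntS T \<le> k \<and> ob \<in> Os"
  unfolding States_def by auto

lemma sym_sig: "(ob, T) \<in> States \<Longrightarrow> L a \<in> set T \<Longrightarrow> a \<in> Sig"
proof -
  assume "(ob, T) \<in> States" "L a \<in> set T"
  then have "L a \<in> syms ob" using States_D by blast
  then show "a \<in> Sig" unfolding syms_def by (cases ob) auto
qed

lemma cntS_le_L: "cntS T \<le> length T"
  unfolding cntS_def by simp

lemma sem_transfer:
  assumes hh: "holesOf T' = holesOf T"
    and f: "\<forall>y z''. length y = Suc (cntS T') \<longrightarrow> flat y = apT T' z'' \<longrightarrow> flat (ev rhs y) = apT T z''"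
  shows "\<forall>y. length y = Suc (rk1 (ob, T')) \<longrightarrow> flat y \<in> sem (ob, T') \<longrightarrow> flat (ev rhs y) \<in> sem (ob, T)"
proof (intro allI impI)
  fix y assume l: "length y = Suc (rk1 (ob, T'))" and s: "flat y \<in> sem (ob, T')"
  then obtain z'' where z: "flat y = apT T' z''" "base ob z''" "\<forall>i<length z''. H i \<notin> set T' \<longrightarrow> z'' ! i = []"
    unfolding sem_def by auto
  have "H i \<in> set T' \<longleftrightarrow> H i \<in> set T" for i using hh hole_mem by metis
  then have "\<forall>i<length z''. H i \<notin> set T \<longrightarrow> z'' ! i = []" using z(3) by blast
  moreover have "flat (ev rhs y) = apT T z''" using f l z(1) by (simp add: rk1_def)
  ultimately show "flat (ev rhs y) \<in> sem (ob, T)" unfolding sem_def using z(2) by auto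
qed

lemma peel_step:
  assumes XS: "(ob, T) \<in> States" and YS: "(ob, T') \<in> States" and pr: "peelrel T T' u"
  shows "\<exists>rhs. ((ob, T), rhs) \<in> P1 \<and> nts_of rhs = [(ob, T')] \<and>
     (\<forall>y z''. length y = Suc (cntS T') \<longrightarrow> flat y = apT T' z'' \<longrightarrow> flat (ev rhs y) = apT T z'')"
proof -
  obtain a where a: "L a \<in> set T" "u \<in> {[[a]], [[a],[]], [[],[a]], [[],[a],[]]}"
    using pr unfolding peelrel_def by blast
  have aS: "a \<in> Sig" using sym_sig[OF XS a(1)] .
  have une: "u \<noteq> []" using a(2) by auto
  have tl1: "tup_len u = 1" using a(2) by (auto simp: tup_len_def)
  have uflat: "flat u \<in> {[L a], [L a, S], [S, L a], [S, L a, S]}" using a(2) by auto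
  have trU: "tup_rank u = cntS (flat u)" using une by (simp add: tup_rank_def cntS_flat)
  have kT: "cntS T \<le> k" "cntS T' \<le> k" using States_D[OF XS] States_D[OF YS] by auto
  have uU: "cntS (flat u) \<le> cntS T \<Longrightarrow> u \<in> U1"
  proof -
    assume "cntS (flat u) \<le> cntS T"
    then have "length u \<le> Suc k" using kT une cntS_flat[of u] by simp
    moreover have "\<forall>w\<in>set u. set w \<subseteq> Sig" using a(2) aS by auto
    ultimately show "u \<in> U1" using tl1 by (simp add: U1_def)
  qed
  have hfu: "holesOf (flat u) = []" by simp
  have ev_ne: "length y = Suc (cntS T') \<Longrightarrow> y \<noteq> []" for y :: "'a tuple" by auto
  have form: "T = flat u @ T' \<or> T = T' @ flat u \<or> (\<exists>P Q. T' = P @ S # Q \<and> T = P @ flat u @ Q)"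
    using pr unfolding peelrel_def by blast
  then show ?thesis
  proof (elim disjE exE conjE)
    assume e: "T = flat u @ T'"
    define rhs where "rhs = Cat (Tup u) (NT (ob, T'))"
    have f: "\<forall>y z''. length y = Suc (cntS T') \<longrightarrow> flat y = apT T' z'' \<longrightarrow> flat (ev rhs y) = apT T z''"
    proof (intro allI impI)
      fix y :: "'a tuple" and z'' assume l: "length y = Suc (cntS T')" and fy: "flat y = apT T' z''"
      have "y \<noteq> []" using l by auto
      then show "flat (ev rhs y) = apT T z''" using e une fy by (simp add: rhs_def flat_tcat)
    qed
    have hh: "holesOf T' = holesOf T" using e by simp
    have c: "cntS T = cntS (flat u) + cntS T'" using e by simp
    have "((ob, T), rhs) \<in> P1"
      unfolding P1_def
    proof (simp, intro conjI)
      show "(ob, T) \<in> States" by fact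
      show "correct k rk1 rhs" using une trU c kT by (simp add: rhs_def rk1_def)
      show "rk1 (ob, T) = trank rk1 rhs" using trU c by (simp add: rhs_def rk1_def)
      show "shp (ob, T) rhs" unfolding shp_def rhs_def using uU c YS by auto
      show "sound (ob, T) rhs" unfolding sound_def using sem_transfer[OF hh f] by (simp add: rhs_def)
    qed
    then show ?thesis using f by (intro exI[of _ rhs]) (simp add: rhs_def)
  next
    assume e: "T = T' @ flat u"
    define rhs where "rhs = Cat (NT (ob, T')) (Tup u)"
    have f: "\<forall>y z''. length y = Suc (cntS T') \<longrightarrow> flat y = apT T' z'' \<longrightarrow> flat (ev rhs y) = apT T z''"
    proof (intro allI impI)
      fix y :: "'a tuple" and z'' assume l: "length y = Suc (cntS T')" and fy: "flat y = apT T' z''"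
      have "y \<noteq> []" using l by auto
      then show "flat (ev rhs y) = apT T z''" using e une fy by (simp add: rhs_def flat_tcat)
    qed
    have hh: "holesOf T' = holesOf T" using e by simp
    have c: "cntS T = cntS (flat u) + cntS T'" using e by simp
    have "((ob, T), rhs) \<in> P1"
      unfolding P1_def
    proof (simp, intro conjI)
      show "(ob, T) \<in> States" by fact
      show "correct k rk1 rhs" using une trU c kT by (simp add: rhs_def rk1_def)
      show "rk1 (ob, T) = trank rk1 rhs" using trU c by (simp add: rhs_def rk1_def)
      show "shp (ob, T) rhs" unfolding shp_def rhs_def using uU c YS by auto
      show "sound (ob, T) rhs" unfolding sound_def using sem_transfer[OF hh f] by (simp add: rhs_def)
    qed
    then show ?thesis using f by (intro exI[of _ rhs]) (simp add: rhs_def)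
  next
    fix P Q assume e1: "T' = P @ S # Q" and e2: "T = P @ flat u @ Q"
    define j where "j = Suc (cntS P)"
    define rhs where "rhs = Intc j (NT (ob, T')) (Tup u)"
    have f: "\<forall>y z''. length y = Suc (cntS T') \<longrightarrow> flat y = apT T' z'' \<longrightarrow> flat (ev rhs y) = apT T z''"
    proof (intro allI impI)
      fix y :: "'a tuple" and z'' assume l: "length y = Suc (cntS T')" and fy: "flat y = apT T' z''"
      have j1: "1 \<le> j" "j < length y" using l e1 by (auto simp: j_def)
      have "flat (ev rhs y) = replS j (flat y) (flat u)" using j1 une by (simp add: rhs_def flat_tintc)
      also have "\<dots> = replS j (apT P z'' @ S # apT Q z'') (flat u)" using fy e1 by simp
      also have "\<dots> = apT P z'' @ flat u @ apT Q z''" by (rule replS_split) (simp add: j_def)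
      also have "\<dots> = apT T z''" using e2 by simp
      finally show "flat (ev rhs y) = apT T z''" .
    qed
    have hh: "holesOf T' = holesOf T" using e1 e2 by simp
    have c: "cntS T = cntS P + cntS (flat u) + cntS Q" "cntS T' = Suc (cntS P + cntS Q)"
      using e1 e2 by auto
    have "((ob, T), rhs) \<in> P1"
      unfolding P1_def
    proof (simp, intro conjI)
      show "(ob, T) \<in> States" by fact
      show "correct k rk1 rhs" using une trU c kT by (simp add: rhs_def rk1_def j_def)
      show "rk1 (ob, T) = trank rk1 rhs" using trU c by (simp add: rhs_def rk1_def)
      show "shp (ob, T) rhs" unfolding shp_def rhs_def using uU c YS by auto
      show "sound (ob, T) rhs" unfolding sound_def using sem_transfer[OF hh f] by (simp add: rhs_def)
    qed
    then show ?thesis using f by (intro exI[of _ rhs]) (simp add: rhs_def)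
  qed
qed


lemma peelrel_props:
  assumes "peelrel T T' u"
  shows "holesOf T' = holesOf T \<and> set T' \<subseteq> insert S (set T) \<and> length T' \<le> length T \<and>
     nL T = Suc (nL T') \<and> (\<forall>z. nL (apT T z) = Suc (nL (apT T' z)))"
proof -
  obtain a where a: "u \<in> {[[a]], [[a],[]], [[],[a]], [[],[a],[]]}"
    using assms unfolding peelrel_def by blast
  have fu: "nL (flat u) = 1" "holesOf (flat u) = []" "1 \<le> length (flat u)" using a by auto
  have form: "T = flat u @ T' \<or> T = T' @ flat u \<or> (\<exists>P Q. T' = P @ S # Q \<and> T = P @ flat u @ Q)"
    using assms unfolding peelrel_def by blast
  have h: "holesOf T' = holesOf T \<and> set T' \<subseteq> insert S (set T) \<and> length T' \<le> length T \<and> nL T = Suc (nL T')"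
    using form fu by auto
  moreover have "\<forall>z. nL (apT T z) = Suc (nL (apT T' z))"
    using h by (simp add: nL_apT)
  ultimately show ?thesis by blast
qed

definition shapeT :: "'n option \<Rightarrow> 'a sy list \<Rightarrow> 'a tuple \<Rightarrow> bool" where
  "shapeT ob T z \<longleftrightarrow> (ob, T) \<in> States \<and> sepok T \<and> holesOf T = filter (\<lambda>i. z ! i \<noteq> []) [0..<length z]"

lemma peelM:
  assumes bz: "base ob z" and zsig: "\<forall>w\<in>set z. set w \<subseteq> Sig" and zl: "length z \<le> Suc k"
    and hyp: "\<forall>T. shapeT ob T z \<longrightarrow> nL T = 0 \<longrightarrow> 1 \<le> nL (apT T z) \<longrightarrow>
       (\<exists>t. gen P1 (ob, T) t \<and> flat t = apT T z)"
  shows "shapeT ob T z \<Longrightarrow> 1 \<le> nL (apT T z) \<Longrightarrow> \<exists>t. gen P1 (ob, T) t \<and> flat t = apT T z"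
proof (induction "nL T" arbitrary: T rule: less_induct)
  case less
  show ?case
  proof (cases "nL T = 0")
    case True then show ?thesis using hyp less.prems by blast
  next
    case nz: False
    have XS: "(ob, T) \<in> States" and sepT: "sepok T"
      and hT: "holesOf T = filter (\<lambda>i. z ! i \<noteq> []) [0..<length z]"
      using less.prems unfolding shapeT_def by auto
    have kT: "cntS T \<le> k" using States_D[OF XS] by simp
    have condT: "\<forall>i<length z. H i \<notin> set T \<longrightarrow> z ! i = []"
    proof (intro allI impI)
      fix i assume "i < length z" "H i \<notin> set T"
      then have "i \<notin> set (holesOf T)" using hole_mem by metis
      then show "z ! i = []" using hT \<open>i < length z\<close> by auto
    qed
    have hlt: "\<forall>i\<in>set (holesOf T). i < length z" using hT by auto
    have inSem: "apT T z \<in> sem (ob, T)" unfolding sem_def using bz condT by auto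
    show ?thesis
    proof (cases "nL (apT T z) = 1")
      case True
      define s where "s = apT T z"
      define t where "t = unflat s"
      have ft: "flat t = s" unfolding t_def by (rule flat_unflat) (simp add: s_def H_notin_apT)
      have tl: "tup_len t = 1" using nL_flat[of t] ft True s_def by simp
      have lt: "length t = Suc (cntS T)" unfolding t_def s_def by (simp add: length_unflat)
      have sig: "\<forall>w\<in>set t. set w \<subseteq> Sig"
      proof (intro ballI subsetI)
        fix w a assume wa: "w \<in> set t" "a \<in> set w"
        have "L a \<in> set (flat t)" unfolding L_in_flat using wa by blast
        then have "L a \<in> set (apT T z)" using ft s_def by simp
        then have "L a \<in> set T \<or> (\<exists>w\<in>set z. a \<in> set w)" by (rule L_in_apT[OF _ hlt])
        then show "a \<in> Sig"
        proof
          assume "L a \<in> set T" then show ?thesis by (rule sym_sig[OF XS])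
        next
          assume "\<exists>w\<in>set z. a \<in> set w" then show ?thesis using zsig by blast
        qed
      qed
      have tU: "t \<in> U1" using tl sig lt kT by (simp add: U1_def)
      have "((ob, T), Tup t) \<in> P1"
        unfolding P1_def
      proof (simp, intro conjI)
        show "(ob, T) \<in> States" by fact
        show "t \<noteq> []" using lt by auto
        show "tup_rank t \<le> k" using lt kT by (simp add: tup_rank_def)
        show "rk1 (ob, T) = tup_rank t" using lt by (simp add: tup_rank_def rk1_def)
        show "shp (ob, T) (Tup t)" unfolding shp_def using tU by blast
        show "sound (ob, T) (Tup t)" unfolding sound_def using ft s_def inSem by simp
      qed
      then have "gen P1 (ob, T) t" using gen.g0[of "(ob, T)" "Tup t" P1] by simp
      then show ?thesis using ft s_def by auto
    next
      case False
      then have two: "2 \<le> nL (apT T z)" using less.prems(2) by simp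
      have notone: "\<forall>a. T \<noteq> [L a]"
      proof
        fix a show "T \<noteq> [L a]"
        proof
          assume "T = [L a]"
          then show False using two by simp
        qed
      qed
      have nH: "length (holesOf T) \<le> Suc k"
      proof -
        have "length (holesOf T) \<le> length [0..<length z]" unfolding hT by (rule length_filter_le)
        then show ?thesis using zl by simp
      qed
      obtain T' u where p: "sepok T'" "cntS T' \<le> k" "peelrel T T' u"
        using peel[OF sepT kT nH _ notone] nz by auto
      note pp = peelrel_props[OF p(3)]
      have YS: "(ob, T') \<in> States"
      proof -
        have "set T' \<subseteq> syms ob" using pp States_D[OF XS] by (auto simp: syms_def)
        moreover have "length T' \<le> Nb" using pp States_D[OF XS] by simp
        ultimately show ?thesis using p(2) States_D[OF XS] unfolding States_def by auto
      qed
      have sh': "shapeT ob T' z" unfolding shapeT_def using YS p(1) pp hT by simp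
      have lt: "nL T' < nL T" using pp by simp
      have nl': "1 \<le> nL (apT T' z)" using pp two by simp
      obtain t' where t': "gen P1 (ob, T') t'" "flat t' = apT T' z" using less.hyps[OF lt sh' nl'] by blast
      have lt': "length t' = Suc (cntS T')" using P1_sound[OF t'(1)] by (simp add: rk1_def)
      obtain rhs where r: "((ob, T), rhs) \<in> P1" "nts_of rhs = [(ob, T')]"
        "\<forall>y z''. length y = Suc (cntS T') \<longrightarrow> flat y = apT T' z'' \<longrightarrow> flat (ev rhs y) = apT T z''"
        using peel_step[OF XS YS p(3)] by blast
      have "gen P1 (ob, T) (ev rhs t')" using gen.g1[OF r(1) r(2) t'(1)] .
      moreover have "flat (ev rhs t') = apT T z" using r(3) lt' t'(2) by blast
      ultimately show ?thesis by blast
    qed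
  qed
qed


lemma finite_rules: "finite (rules G)"
  using dc unfolding is_dcfg_def by blast

lemma Lmax_ge: "(A, \<alpha>) \<in> rules G \<Longrightarrow> nL (ctxT (rk G) \<alpha>) \<le> Lmax"
  unfolding Lmax_def
  by (rule Max_ge) (use finite_rules in auto)

lemma cond_of_holes: "holesOf T = filter (\<lambda>i. z ! i \<noteq> []) [0..<length z] \<Longrightarrow>
   \<forall>i<length z. H i \<notin> set T \<longrightarrow> z ! i = []"
proof (intro allI impI)
  fix i assume hT: "holesOf T = filter (\<lambda>i. z ! i \<noteq> []) [0..<length z]" and "i < length z" "H i \<notin> set T"
  then have "i \<notin> set (holesOf T)" using hole_mem by metis
  then show "z ! i = []" using hT \<open>i < length z\<close> by auto
qed

lemma main:
  "gen (rules G) B z \<Longrightarrow> \<forall>T. shapeT (Some B) T z \<longrightarrow> nL T = 0 \<longrightarrow> 1 \<le> nL (apT T z) \<longrightarrow>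
     (\<exists>t. gen P1 (Some B, T) t \<and> flat t = apT T z)"
proof (induction rule: gen.induct)
  case (g0 A \<alpha>)
  show ?case
  proof (intro allI impI)
    fix T assume sh: "shapeT (Some A) T (val \<alpha>)" and Tl: "nL T = 0" and nl: "1 \<le> nL (apT T (val \<alpha>))"
    define z where "z = val \<alpha>"
    define C where "C = ctxT (rk G) \<alpha>"
    note r = dc_rule[OF g0(1)]
    have E: "length (ev \<alpha> []) = Suc (trank (rk G) \<alpha>) \<and> flat (ev \<alpha> []) = apT C [] \<and> holesOf C = []"
      using EV[of k "rk G" \<alpha> "[]"] r g0(2) by (auto simp: C_def)
    have v: "z = ev \<alpha> []" using val_ev[OF g0(2)] z_def by simp
    have fz: "flat z = apT C []" using E v by simp
    have zne: "z \<noteq> []" using E v by auto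
    have hC: "holesOf C = [0..<length ([] :: 'a tuple)]" using E by simp
    have XS: "(Some A, T) \<in> States" and sepT: "sepok T" and hT: "holesOf T = filter (\<lambda>i. z ! i \<noteq> []) [0..<length z]"
      using sh unfolding shapeT_def z_def by auto
    define W where "W = filter (keepf []) (compT T (splitS C))"
    note D = descend[OF fz zne hC sepT hT Tl, folded W_def]
    have hW: "holesOf W = []" using D(3) by simp
    have WS: "(None, W) \<in> States"
    proof -
      have "set W \<subseteq> syms None"
      proof
        fix x assume x: "x \<in> set W"
        then have "x \<in> set C \<or> x = S" using D(6) by auto
        then show "x \<in> syms None"
        proof
          assume xC: "x \<in> set C"
          show ?thesis
          proof (cases x)
            case (L a) then show ?thesis using ctxT_sig[OF g0(1)] xC by (auto simp: syms_def C_def)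
          next
            case (H i)
            then have "i \<in> set (holesOf C)" using xC hole_mem by metis
            then show ?thesis using E by simp
          qed (auto simp: syms_def)
        qed (auto simp: syms_def)
      qed
      moreover have "length W \<le> Nb"
        using length_decomp[of W] hW D(4) D(5) Lmax_ge[OF g0(1)] States_D[OF XS]
        by (simp add: Nb_def C_def)
      moreover have "cntS W \<le> k" using D(4) States_D[OF XS] by simp
      ultimately show ?thesis unfolding States_def Os_def by auto
    qed
    have shW: "shapeT None W []" unfolding shapeT_def using WS D(2) hW by simp
    have hyp: "\<forall>T. shapeT None T [] \<longrightarrow> nL T = 0 \<longrightarrow> 1 \<le> nL (apT T []) \<longrightarrow>
       (\<exists>t. gen P1 (None, T) t \<and> flat t = apT T [])"
    proof (intro allI impI)
      fix T' :: "'a sy list" assume "shapeT None T' []" "nL T' = 0" "1 \<le> nL (apT T' [])"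
      then have "holesOf T' = []" unfolding shapeT_def by simp
      then have "apT T' [] = T'" by (rule apT_noholes)
      then show "\<exists>t. gen P1 (None, T') t \<and> flat t = apT T' []" using \<open>nL T' = 0\<close> \<open>1 \<le> nL (apT T' [])\<close> by simp
    qed
    have nlW: "1 \<le> nL (apT W [])" using D(1) nl z_def by simp
    obtain t where t: "gen P1 (None, W) t" "flat t = apT W []"
      using peelM[of None "[]", OF _ _ _ hyp shW nlW] by auto
    have sub: "sem (None, W) \<subseteq> sem (Some A, T)"
    proof
      fix x assume "x \<in> sem (None, W)"
      then have "x = apT T z" using D(1) unfolding sem_def by auto
      moreover have "gen (rules G) A z" using gen.g0[OF g0(1) g0(2)] z_def by simp
      ultimately show "x \<in> sem (Some A, T)" unfolding sem_def using cond_of_holes[OF hT] by auto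
    qed
    have "gen P1 (Some A, T) t"
      using incl[OF t(1) _ sub XS] t(2) nlW D(4) by (simp add: rk1_def)
    then show "\<exists>t. gen P1 (Some A, T) t \<and> flat t = apT T (val \<alpha>)" using t(2) D(1) z_def by auto
  qed
next
  case (g1 A \<alpha> B z')
  show ?case
  proof (intro allI impI)
    fix T assume sh: "shapeT (Some A) T (ev \<alpha> z')" and Tl: "nL T = 0" and nl: "1 \<le> nL (apT T (ev \<alpha> z'))"
    define z where "z = ev \<alpha> z'"
    define C where "C = ctxT (rk G) \<alpha>"
    note r = dc_rule[OF g1(1)]
    note gp = gen_props[OF g1(3)]
    have E: "length z = Suc (trank (rk G) \<alpha>) \<and> flat z = apT C z' \<and> holesOf C = [0..<Suc (rk G B)]"
      using EV[of k "rk G" \<alpha> z'] r g1(2) gp by (auto simp: C_def z_def)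
    have fz: "flat z = apT C z'" using E by simp
    have zne: "z \<noteq> []" using E by auto
    have hC: "holesOf C = [0..<length z']" using E gp by simp
    have XS: "(Some A, T) \<in> States" and sepT: "sepok T" and hT: "holesOf T = filter (\<lambda>i. z ! i \<noteq> []) [0..<length z]"
      using sh unfolding shapeT_def z_def by auto
    define W where "W = filter (keepf z') (compT T (splitS C))"
    note D = descend[OF fz zne hC sepT hT Tl, folded W_def]
    have WS: "(Some B, W) \<in> States"
    proof -
      have "set W \<subseteq> syms (Some B)"
      proof
        fix x assume x: "x \<in> set W"
        then have "x \<in> set C \<or> x = S" using D(6) by auto
        then show "x \<in> syms (Some B)"
        proof
          assume xC: "x \<in> set C"
          show ?thesis
          proof (cases x)
            case (L a) then show ?thesis using ctxT_sig[OF g1(1)] xC by (auto simp: syms_def C_def)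
          next
            case (H i)
            then have "i \<in> set (holesOf C)" using xC hole_mem by metis
            then have "i \<le> rk G B" using E by auto
            then show ?thesis using H by (auto simp: syms_def)
          qed (auto simp: syms_def)
        qed (auto simp: syms_def)
      qed
      moreover have "length W \<le> Nb"
      proof -
        have "length (holesOf W) \<le> length [0..<length z']" unfolding D(3) by (rule length_filter_le)
        then show ?thesis
          using length_decomp[of W] D(4) D(5) Lmax_ge[OF g1(1)] States_D[OF XS] gp
          by (simp add: Nb_def C_def)
      qed
      moreover have "cntS W \<le> k" using D(4) States_D[OF XS] by simp
      ultimately show ?thesis unfolding States_def Os_def using gp by auto
    qed
    have shW: "shapeT (Some B) W z'" unfolding shapeT_def using WS D(2) D(3) by simp
    have nlW: "1 \<le> nL (apT W z')" using D(1) nl z_def by simp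
    obtain t where t: "gen P1 (Some B, W) t" "flat t = apT W z'"
      using peelM[of "Some B" z', OF _ _ _ g1.IH shW nlW] g1(3) gp by auto
    have sub: "sem (Some B, W) \<subseteq> sem (Some A, T)"
    proof
      fix x assume "x \<in> sem (Some B, W)"
      then obtain z'' where z'': "x = apT W z''" "gen (rules G) B z''" "\<forall>i<length z''. H i \<notin> set W \<longrightarrow> z'' ! i = []"
        unfolding sem_def by auto
      note gp'' = gen_props[OF z''(2)]
      define Z where "Z = ev \<alpha> z''"
      have gZ: "gen (rules G) A Z" using gen.g1[OF g1(1) g1(2) z''(2)] Z_def by simp
      have EZ: "length Z = Suc (trank (rk G) \<alpha>) \<and> flat Z = apT C z''"
        using EV[of k "rk G" \<alpha> z''] r g1(2) gp'' by (auto simp: C_def Z_def)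
      have l'': "length z'' = length z'" using gp gp'' by simp
      have "apT W z'' = apT T Z \<and> (\<forall>j<length Z. H j \<notin> set T \<longrightarrow> Z ! j = [])"
      proof -
        have "Z \<noteq> []" using EZ by auto
        then show ?thesis using D(7)[OF l'' z''(3)] EZ by blast
      qed
      then show "x \<in> sem (Some A, T)" unfolding sem_def using gZ z''(1) by auto
    qed
    have "gen P1 (Some A, T) t"
      using incl[OF t(1) _ sub XS] t(2) nlW D(4) by (simp add: rk1_def)
    then show "\<exists>t. gen P1 (Some A, T) t \<and> flat t = apT T (ev \<alpha> z')" using t(2) D(1) z_def by auto
  qed
qed


definition G1 :: "('n option \<times> 'a sy list, 'a) grammar" where
  "G1 = \<lparr>nts = States, rk = rk1, rules = P1, start = start1\<rparr>"

lemma finite_States: "finite States"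
proof -
  have fO: "finite Os" using dc unfolding Os_def is_dcfg_def by auto
  have "finite {T. set T \<subseteq> syms ob \<and> length T \<le> Nb \<and> cntS T \<le> k}" for ob
  proof -
    have "finite (syms ob)" unfolding syms_def using fin by (cases ob) auto
    then have "finite {T. set T \<subseteq> syms ob \<and> length T \<le> Nb}" by (rule finite_lists_length_le)
    then show ?thesis by (rule rev_finite_subset) auto
  qed
  then show ?thesis unfolding States_def using fO by (intro finite_SigmaI) auto
qed

lemma start1_States: "start1 \<in> States"
  using dc unfolding start1_def States_def Os_def syms_def is_dcfg_def Nb_def by auto

lemma finite_U1: "finite U1"
proof -
  define W1 where "W1 = {w. set w \<subseteq> Sig \<and> length w \<le> 1}"
  have fW: "finite W1" unfolding W1_def by (rule finite_lists_length_le[OF fin])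
  have "U1 \<subseteq> {u. set u \<subseteq> W1 \<and> length u \<le> Suc k}"
  proof
    fix u assume "u \<in> U1"
    then have u: "tup_len u = 1" "\<forall>w\<in>set u. set w \<subseteq> Sig" "length u \<le> Suc k" by (auto simp: U1_def)
    have "\<forall>w\<in>set u. length w \<le> 1"
    proof
      fix w assume "w \<in> set u"
      then have "length w \<le> sum_list (map length u)" by (simp add: member_le_sum_list)
      then show "length w \<le> 1" using u(1) by (simp add: tup_len_def)
    qed
    then show "u \<in> {u. set u \<subseteq> W1 \<and> length u \<le> Suc k}" using u W1_def by auto
  qed
  moreover have "finite {u. set u \<subseteq> W1 \<and> length u \<le> Suc k}" by (rule finite_lists_length_le[OF fW])
  ultimately show ?thesis by (rule finite_subset)
qed

lemma P1_D: "(X, rhs) \<in> P1 \<Longrightarrow> X \<in> States \<and> correct k rk1 rhs \<and> rk1 X = trank rk1 rhs \<and> shp X rhs \<and> sound X rhs"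
  unfolding P1_def by auto

lemma finite_P1: "finite P1"
proof -
  define RHS where "RHS = (\<lambda>(u, Y). Cat (Tup u) (NT Y)) ` (U1 \<times> States) \<union> (\<lambda>(u, Y). Cat (NT Y) (Tup u)) ` (U1 \<times> States)
     \<union> (\<lambda>(j, u, Y). Intc j (NT Y) (Tup u)) ` ({..k} \<times> U1 \<times> States) \<union> Tup ` U1 \<union> {Tup [[]]}"
  have fR: "finite RHS" unfolding RHS_def using finite_U1 finite_States by auto
  have "P1 \<subseteq> States \<times> RHS"
  proof
    fix r assume r: "r \<in> P1"
    obtain X rhs where e: "r = (X, rhs)" by (cases r)
    note m = P1_D[OF r[unfolded e]]
    have "rhs \<in> RHS"
    proof -
      from m have "shp X rhs" by simp
      then show ?thesis unfolding shp_def
      proof (elim disjE exE conjE bexE)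
        fix u Y j assume a: "u \<in> U1" "Y \<in> States" "rhs = Intc j (NT Y) (Tup u)"
        then have "j \<le> k" using m by simp
        then have "(j, u, Y) \<in> {..k} \<times> U1 \<times> States" using a by simp
        then have "rhs \<in> (\<lambda>(j, u, Y). Intc j (NT Y) (Tup u)) ` ({..k} \<times> U1 \<times> States)"
          using a(3) by force
        then show ?thesis unfolding RHS_def by blast
      qed (auto simp: RHS_def)
    qed
    then show "r \<in> States \<times> RHS" using e m by auto
  qed
  then show ?thesis using finite_States fR by (meson finite_SigmaI finite_subset)
qed

lemma shp_nts: "shp X rhs \<Longrightarrow> (nts_of rhs = [] \<or> (\<exists>Y\<in>States. nts_of rhs = [Y])) \<and>
    (\<forall>u \<in> set (leaves rhs). tup_len u \<le> 1 \<and> (\<forall>w \<in> set u. set w \<subseteq> Sig))"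
  unfolding shp_def U1_def by (auto simp: tup_len_def)

lemma G1_dcfg: "is_dcfg k Sig G1"
  unfolding is_dcfg_def G1_def
proof (simp, intro conjI)
  show "finite States" by (rule finite_States)
  show "start1 \<in> States" by (rule start1_States)
  show "rk1 start1 = 0" by (simp add: rk1_def start1_def)
  show "finite P1" by (rule finite_P1)
  show "\<forall>(A, \<alpha>)\<in>P1. A \<in> States \<and> correct k rk1 \<alpha> \<and> rk1 A = trank rk1 \<alpha> \<and> set (nts_of \<alpha>) \<subseteq> States \<and>
      (\<forall>u\<in>set (leaves \<alpha>). tup_len u \<le> Suc 0 \<and> (\<forall>w\<in>set u. set w \<subseteq> Sig))"
  proof (clarify)
    fix A \<alpha> assume "(A, \<alpha>) \<in> P1"
    note m = P1_D[OF this]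
    note sn = shp_nts[of A \<alpha>]
    show "A \<in> States \<and> correct k rk1 \<alpha> \<and> rk1 A = trank rk1 \<alpha> \<and> set (nts_of \<alpha>) \<subseteq> States \<and>
      (\<forall>u\<in>set (leaves \<alpha>). tup_len u \<le> Suc 0 \<and> (\<forall>w\<in>set u. set w \<subseteq> Sig))"
      using m sn by auto
  qed
qed

lemma G1_nf: "normal_form G1"
  unfolding normal_form_def
proof
  fix r assume "r \<in> rules G1"
  then obtain X rhs where e: "r = (X, rhs)" "(X, rhs) \<in> P1" by (cases r) (auto simp: G1_def)
  note m = P1_D[OF e(2)]
  have sh: "shp X rhs" using m by simp
  have XS: "X \<in> States" using m by simp
  show "nf_rule G1 r" using sh unfolding shp_def
  proof (elim disjE exE conjE bexE)
    fix u Y assume a: "u \<in> U1" "Y \<in> States" "rhs = Cat (Tup u) (NT Y)"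
    have "X \<in> nts G1 \<and> Y \<in> nts G1 \<and> tup_len u = 1 \<and> (r = (X, Cat (Tup u) (NT Y)) \<or> r = (X, Cat (NT Y) (Tup u)))"
      using a XS e(1) by (simp add: U1_def G1_def)
    then show ?thesis unfolding nf_rule_def by blast
  next
    fix u Y assume a: "u \<in> U1" "Y \<in> States" "rhs = Cat (NT Y) (Tup u)"
    have "X \<in> nts G1 \<and> Y \<in> nts G1 \<and> tup_len u = 1 \<and> (r = (X, Cat (Tup u) (NT Y)) \<or> r = (X, Cat (NT Y) (Tup u)))"
      using a XS e(1) by (simp add: U1_def G1_def)
    then show ?thesis unfolding nf_rule_def by blast
  next
    fix u Y j assume a: "u \<in> U1" "Y \<in> States" "rhs = Intc j (NT Y) (Tup u)"
    have "X \<in> nts G1 \<and> Y \<in> nts G1 \<and> tup_len u = 1 \<and> r = (X, Intc j (NT Y) (Tup u))"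
      using a XS e(1) by (simp add: U1_def G1_def)
    then show ?thesis unfolding nf_rule_def by blast
  next
    fix u assume a: "u \<in> U1" "rhs = Tup u"
    have "X \<in> nts G1 \<and> tup_len u = 1 \<and> r = (X, Tup u)"
      using a XS e(1) by (simp add: U1_def G1_def)
    then show ?thesis unfolding nf_rule_def by blast
  next
    assume a: "X = start1" "rhs = Tup [[]]"
    then show ?thesis unfolding nf_rule_def e(1) G1_def by simp
  qed
qed

lemma G1_linear: "\<forall>(A, \<beta>) \<in> rules G1. length (nts_of \<beta>) \<le> 1"
  using shp_nts P1_D by (fastforce simp: G1_def)

lemma G_linear: "\<forall>(A, \<beta>) \<in> rules G. length (nts_of \<beta>) \<le> 1"
  using lin unfolding linear_grammar_def by blast

lemma G1_lang: "lang G1 = lang G"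
proof -
  have L1: "lang G1 = {t. gen P1 start1 t}"
    unfolding lang_def using lang_nt_gen[OF G1_linear] by (simp add: G1_def)
  have L0: "lang G = {y. gen (rules G) (start G) y}"
    unfolding lang_def using lang_nt_gen[OF G_linear] by simp
  have rs: "rk G (start G) = 0" using dc unfolding is_dcfg_def by simp
  show ?thesis
  proof
    show "lang G1 \<subseteq> lang G"
    proof
      fix t assume "t \<in> lang G1"
      then have g: "gen P1 start1 t" using L1 by simp
      note sd = P1_sound[OF g]
      then obtain z where z: "flat t = apT [H 0] z" "gen (rules G) (start G) z"
        unfolding sem_def start1_def by auto
      have lz: "length z = 1" using gen_props[OF z(2)] rs by simp
      then have "apT [H 0] z = flat z" using apT_holes[of z 0] by (simp add: holes_def)
      moreover have "length t = 1" using sd by (simp add: rk1_def start1_def)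
      ultimately have "t = z" using z(1) lz flat_inj by metis
      then show "t \<in> lang G" using L0 z(2) by simp
    qed
  next
    show "lang G \<subseteq> lang G1"
    proof
      fix y assume "y \<in> lang G"
      then have g: "gen (rules G) (start G) y" using L0 by simp
      have ly: "length y = 1" using gen_props[OF g] rs by simp
      then obtain w where yw: "y = [w]" by (cases y) auto
      show "y \<in> lang G1"
      proof (cases "w = []")
        case True
        have "(start1, Tup [[]]) \<in> P1"
          unfolding P1_def
        proof (simp, intro conjI)
          show "start1 \<in> States" by (rule start1_States)
          show "rk1 start1 = tup_rank [[]]" by (simp add: rk1_def start1_def tup_rank_def)
          show "shp start1 (Tup [[]])" by (simp add: shp_def)
          show "sound start1 (Tup [[]])"
            unfolding sound_def sem_def start1_def using g yw True
            by (auto simp: flat_nil_tuple intro!: exI[of _ y])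
        qed (simp add: tup_rank_def)
        then have "gen P1 start1 [[]]" using gen.g0[of start1 "Tup [[]]" P1] by simp
        then show ?thesis using L1 yw True by simp
      next
        case False
        have sh: "shapeT (Some (start G)) [H 0] y"
          unfolding shapeT_def using start1_States ly yw False
          by (simp add: start1_def sepok_def)
        have nl: "1 \<le> nL (apT [H 0] y)" using yw False nL_apT[of "[H 0]" y] by (simp add: Suc_le_eq)
        obtain t where t: "gen P1 (Some (start G), [H 0]) t" "flat t = apT [H 0] y"
          using main[OF g] sh nl by auto
        have "apT [H 0] y = flat y" using apT_holes[of y 0] ly by (simp add: holes_def)
        moreover have "length t = 1" using P1_sound[OF t(1)] by (simp add: rk1_def)
        ultimately have "t = y" using t(2) ly flat_inj by metis
        then show ?thesis using L1 t(1) by (simp add: start1_def)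
      qed
    qed
  qed
qed

end

lemma nf_linear: "normal_form G \<Longrightarrow> \<forall>(A, \<beta>) \<in> rules G. length (nts_of \<beta>) \<le> 1"
  unfolding normal_form_def nf_rule_def by fastforce

context
  fixes f :: "'m \<Rightarrow> nat" and N :: "'m set" and rf :: "'m \<Rightarrow> nat" and rg :: "nat \<Rightarrow> nat"
  assumes rr: "\<forall>B\<in>N. rg (f B) = rf B"
begin

lemma mt_props: "set (nts_of \<alpha>) \<subseteq> N \<Longrightarrow>
  nts_of (map_tm f id \<alpha>) = map f (nts_of \<alpha>) \<and> leaves (map_tm f id \<alpha>) = leaves \<alpha> \<and>
  trank rg (map_tm f id \<alpha>) = trank rf \<alpha> \<and> (correct k rg (map_tm f id \<alpha>) = correct k rf \<alpha>) \<and>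
  (\<forall>z. ev (map_tm f id \<alpha>) z = ev \<alpha> z) \<and> val (map_tm f id \<alpha>) = val \<alpha>"
  by (induction \<alpha>) (auto simp: rr)

end

lemma rename:
  fixes G1 :: "('m, 'a) grammar"
  assumes dc: "is_dcfg k Sig G1" and nf: "normal_form G1"
  shows "\<exists>G2 :: (nat, 'a) grammar. is_dcfg k Sig G2 \<and> normal_form G2 \<and> lang G2 = lang G1"
proof -
  have fN: "finite (nts G1)" using dc unfolding is_dcfg_def by simp
  obtain f :: "'m \<Rightarrow> nat" and n where f: "f ` nts G1 = {i. i < n}" "inj_on f (nts G1)"
    using finite_imp_inj_to_nat_seg[OF fN] by blast
  define rg where "rg = (\<lambda>i. rk G1 (the_inv_into (nts G1) f i))"
  have rr: "\<forall>B\<in>nts G1. rg (f B) = rk G1 B" unfolding rg_def using the_inv_into_f_f[OF f(2)] by simp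
  define G2 :: "(nat, 'a) grammar" where
    "G2 = \<lparr>nts = f ` nts G1, rk = rg, rules = (\<lambda>(A, \<alpha>). (f A, map_tm f id \<alpha>)) ` rules G1, start = f (start G1)\<rparr>"
  have rule1: "(A, \<alpha>) \<in> rules G1 \<Longrightarrow> A \<in> nts G1 \<and> correct k (rk G1) \<alpha> \<and> rk G1 A = trank (rk G1) \<alpha> \<and>
      set (nts_of \<alpha>) \<subseteq> nts G1 \<and> (\<forall>u \<in> set (leaves \<alpha>). tup_len u \<le> 1 \<and> (\<forall>w \<in> set u. set w \<subseteq> Sig))" for A \<alpha>
    using dc unfolding is_dcfg_def by fast
  note MP = mt_props[where f=f and N="nts G1" and rf="rk G1" and rg=rg and k=k, OF rr]
  have lin1: "\<forall>(A, \<beta>) \<in> rules G1. length (nts_of \<beta>) \<le> 1" using nf_linear[OF nf] .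
  have dc2: "is_dcfg k Sig G2"
    unfolding is_dcfg_def
  proof (intro conjI)
    show "finite (nts G2)" using fN by (simp add: G2_def)
    show "start G2 \<in> nts G2" using dc by (simp add: G2_def is_dcfg_def)
    show "rk G2 (start G2) = 0" using dc rr by (simp add: G2_def is_dcfg_def)
    show "finite (rules G2)" using dc by (simp add: G2_def is_dcfg_def)
    show "\<forall>(A, \<alpha>)\<in>rules G2. A \<in> nts G2 \<and> correct k (rk G2) \<alpha> \<and> rk G2 A = trank (rk G2) \<alpha> \<and>
        set (nts_of \<alpha>) \<subseteq> nts G2 \<and> (\<forall>u\<in>set (leaves \<alpha>). tup_len u \<le> 1 \<and> (\<forall>w\<in>set u. set w \<subseteq> Sig))"
    proof (clarify)
      fix A' \<alpha>' assume "(A', \<alpha>') \<in> rules G2"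
      then obtain A \<alpha> where a: "(A, \<alpha>) \<in> rules G1" "A' = f A" "\<alpha>' = map_tm f id \<alpha>" by (auto simp: G2_def)
      note r = rule1[OF a(1)]
      note m = MP[OF conjunct1[OF conjunct2[OF conjunct2[OF conjunct2[OF r]]]]]
      show "A' \<in> nts G2 \<and> correct k (rk G2) \<alpha>' \<and> rk G2 A' = trank (rk G2) \<alpha>' \<and>
        set (nts_of \<alpha>') \<subseteq> nts G2 \<and> (\<forall>u\<in>set (leaves \<alpha>'). tup_len u \<le> 1 \<and> (\<forall>w\<in>set u. set w \<subseteq> Sig))"
        using r m a rr by (auto simp: G2_def)
    qed
  qed
  have nf2: "normal_form G2"
    unfolding normal_form_def
  proof
    fix r' assume "r' \<in> rules G2"
    then obtain A \<alpha> where a: "(A, \<alpha>) \<in> rules G1" "r' = (f A, map_tm f id \<alpha>)" by (auto simp: G2_def)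
    have "nf_rule G1 (A, \<alpha>)" using nf a(1) unfolding normal_form_def by blast
    then show "nf_rule G2 r'" unfolding nf_rule_def a(2)
      by (elim disjE exE conjE) (auto simp: G2_def)
  qed
  have genE: "A \<in> nts G1 \<Longrightarrow> gen (rules G2) (f A) y \<longleftrightarrow> gen (rules G1) A y" for A y
  proof
    assume "gen (rules G1) A y"
    then show "gen (rules G2) (f A) y"
    proof (induction rule: gen.induct)
      case (g0 A \<alpha>)
      note m = MP[OF conjunct1[OF conjunct2[OF conjunct2[OF conjunct2[OF rule1[OF g0(1)]]]]]]
      have "(f A, map_tm f id \<alpha>) \<in> rules G2" using g0(1) by (force simp: G2_def)
      moreover have "nts_of (map_tm f id \<alpha>) = []" using m g0(2) by simp
      ultimately have "gen (rules G2) (f A) (val (map_tm f id \<alpha>))" by (rule gen.g0)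
      then show ?case using m by simp
    next
      case (g1 A \<alpha> B z)
      note m = MP[OF conjunct1[OF conjunct2[OF conjunct2[OF conjunct2[OF rule1[OF g1(1)]]]]]]
      have "(f A, map_tm f id \<alpha>) \<in> rules G2" using g1(1) by (force simp: G2_def)
      moreover have "nts_of (map_tm f id \<alpha>) = [f B]" using m g1(2) by simp
      ultimately have "gen (rules G2) (f A) (ev (map_tm f id \<alpha>) z)" using g1.IH by (rule gen.g1)
      then show ?case using m by simp
    qed
  next
    assume g: "gen (rules G2) (f A) y" and A: "A \<in> nts G1"
    have "\<forall>A. A \<in> nts G1 \<longrightarrow> A' = f A \<longrightarrow> gen (rules G1) A y" if "gen (rules G2) A' y" for A'
      using that
    proof (induction rule: gen.induct)
      case (g0 A' \<alpha>')
      show ?case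
      proof (intro allI impI)
        fix A assume A: "A \<in> nts G1" "A' = f A"
        obtain A0 \<alpha> where a: "(A0, \<alpha>) \<in> rules G1" "A' = f A0" "\<alpha>' = map_tm f id \<alpha>" using g0(1) by (auto simp: G2_def)
        note r = rule1[OF a(1)]
        note m = MP[OF conjunct1[OF conjunct2[OF conjunct2[OF conjunct2[OF r]]]]]
        have "A0 = A" using a(2) A f(2) r by (metis inj_on_def)
        moreover have "nts_of \<alpha> = []" using g0(2) a(3) m by simp
        ultimately have "gen (rules G1) A (val \<alpha>)" using a(1) gen.g0 by metis
        then show "gen (rules G1) A (val \<alpha>')" using a(3) m by simp
      qed
    next
      case (g1 A' \<alpha>' B' z)
      show ?case
      proof (intro allI impI)
        fix A assume A: "A \<in> nts G1" "A' = f A"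
        obtain A0 \<alpha> where a: "(A0, \<alpha>) \<in> rules G1" "A' = f A0" "\<alpha>' = map_tm f id \<alpha>" using g1(1) by (auto simp: G2_def)
        note r = rule1[OF a(1)]
        note m = MP[OF conjunct1[OF conjunct2[OF conjunct2[OF conjunct2[OF r]]]]]
        have "A0 = A" using a(2) A f(2) r by (metis inj_on_def)
        obtain B where B: "nts_of \<alpha> = [B]" "B' = f B" using g1(2) a(3) m by (cases "nts_of \<alpha>") auto
        have "B \<in> nts G1" using B r by auto
        then have "gen (rules G1) B z" using g1.IH B by blast
        then have "gen (rules G1) A (ev \<alpha> z)" using a(1) B(1) \<open>A0 = A\<close> gen.g1 by metis
        then show "gen (rules G1) A (ev \<alpha>' z)" using a(3) m by simp
      qed
    qed
    then show "gen (rules G1) A y" using g A by blast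
  qed
  have lin2: "\<forall>(A, \<beta>) \<in> rules G2. length (nts_of \<beta>) \<le> 1" using nf_linear[OF nf2] .
  have sN: "start G1 \<in> nts G1" using dc unfolding is_dcfg_def by simp
  have e: "gen (rules G2) (start G2) y = gen (rules G1) (start G1) y" for y
    using genE[OF sN, of y] by (simp add: G2_def)
  have "lang G2 = lang G1"
    unfolding lang_def lang_nt_gen[OF lin2] lang_nt_gen[OF lin1]
    using e by blast
  then show ?thesis using dc2 nf2 by blast
qed

theorem theorem2:
  fixes k :: nat and Sig :: "'a set" and G :: "('n, 'a) grammar"
  assumes "finite Sig"
    and "is_dcfg k Sig G"
    and "linear_grammar G"
  shows "\<exists>G' :: (nat, 'a) grammar.
           is_dcfg k Sig G' \<and> normal_form G' \<and> lang G' = lang G"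
proof -
  have "is_dcfg k Sig (G1 k Sig G)" "normal_form (G1 k Sig G)" "lang (G1 k Sig G) = lang G"
    using G1_dcfg[OF assms] G1_nf[OF assms] G1_lang[OF assms] by auto
  then show ?thesis using rename by metis
qed

end
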